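(* Assume $\mathbb F$ is algebraically closed with $\operatorname{char}\mathbb F=0$. There is a five-dimensional $\Re$-module $V$ with basis $v_0,\dots,v_4$ on which $A,B,C,D$ are represented by $\tfrac14$ times the matrices $\begin{pmatrix}15&0&0&0&0\\4&3&0&0&0\\0&4&-1&0&0\\0&0&4&3&0\\0&0&0&4&15\end{pmatrix}$, $\begin{pmatrix}15&-36&0&0&0\\0&3&-6&0&0\\0&0&-1&-6&0\\0&0&0&3&-36\\0&0&0&0&15\end{pmatrix}$, $\begin{pmatrix}-9&36&0&0&0\\-4&15&6&0&0\\0&-4&23&6&0\\0&0&-4&15&36\\0&0&0&-4&-9\end{pmatrix}$, $\begin{pmatrix}18&-54&0&0&0\\6&-15&-3&0&0\\0&2&0&3&0\\0&0&-2&15&54\\0&0&0&-6&-18\end{pmatrix}$ respectively. On $V$ one has $\alpha=\beta=\gamma=0$, $V$ is irreducible, and each of $A,B,C$ has minimal polynomial $(x+\tfrac14)(x-\tfrac34)^2(x-\tfrac{15}4)^2$ on $V$; in particular none of $A,B,C$ is diagonalizable on $V$.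
   Context: The Racah algebra $\Re$ is the unital associative $\mathbb F$-algebra with generators $A,B,C,D$ and relations $[A,B]=[B,C]=[C,A]=2D$ together with the requirement that each of $\alpha:=[A,D]+AC-BA$, $\beta:=[B,D]+BA-CB$, $\gamma:=[C,D]+CB-AC$ is central in $\Re$. Matrices act on column coordinate vectors with respect to the basis $v_0,\dots,v_4$ (the $j$-th column gives the image of $v_j$). *)

theory Defs
  imports "Jordan_Normal_Form.Matrix" "HOL-Computational_Algebra.Polynomial"
begin

text \<open>Matrices act on column coordinate vectors w.r.t. the basis v0..v4.\<close>

definition matA :: "'a::field mat" where
  "matA = (1/4) \<cdot>\<^sub>m mat_of_rows_list 5
     [[15,0,0,0,0],[4,3,0,0,0],[0,4,-1,0,0],[0,0,4,3,0],[0,0,0,4,15]]"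

definition matB :: "'a::field mat" where
  "matB = (1/4) \<cdot>\<^sub>m mat_of_rows_list 5
     [[15,-36,0,0,0],[0,3,-6,0,0],[0,0,-1,-6,0],[0,0,0,3,-36],[0,0,0,0,15]]"

definition matC :: "'a::field mat" where
  "matC = (1/4) \<cdot>\<^sub>m mat_of_rows_list 5
     [[-9,36,0,0,0],[-4,15,6,0,0],[0,-4,23,6,0],[0,0,-4,15,36],[0,0,0,-4,-9]]"

definition matD :: "'a::field mat" where
  "matD = (1/4) \<cdot>\<^sub>m mat_of_rows_list 5
     [[18,-54,0,0,0],[6,-15,-3,0,0],[0,2,0,3,0],[0,0,-2,15,54],[0,0,0,-6,-18]]"

definition commut :: "'a::comm_ring_1 mat \<Rightarrow> 'a mat \<Rightarrow> 'a mat" where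
  "commut X Y = X * Y - Y * X"

definition racah_alpha :: "'a::comm_ring_1 mat \<Rightarrow> 'a mat \<Rightarrow> 'a mat \<Rightarrow> 'a mat \<Rightarrow> 'a mat" where
  "racah_alpha A B C D = commut A D + A * C - B * A"
definition racah_beta :: "'a::comm_ring_1 mat \<Rightarrow> 'a mat \<Rightarrow> 'a mat \<Rightarrow> 'a mat \<Rightarrow> 'a mat" where
  "racah_beta A B C D = commut B D + B * A - C * B"
definition racah_gamma :: "'a::comm_ring_1 mat \<Rightarrow> 'a mat \<Rightarrow> 'a mat \<Rightarrow> 'a mat \<Rightarrow> 'a mat" where
  "racah_gamma A B C D = commut C D + C * B - A * C"

definition racah_rep :: "nat \<Rightarrow> 'a::comm_ring_1 mat \<Rightarrow> 'a mat \<Rightarrow> 'a mat \<Rightarrow> 'a mat \<Rightarrow> bool" where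
  "racah_rep n A B C D \<longleftrightarrow>
     A \<in> carrier_mat n n \<and> B \<in> carrier_mat n n \<and> C \<in> carrier_mat n n \<and> D \<in> carrier_mat n n \<and>
     commut A B = 2 \<cdot>\<^sub>m D \<and> commut B C = 2 \<cdot>\<^sub>m D \<and> commut C A = 2 \<cdot>\<^sub>m D \<and>
     (\<forall>Z \<in> {racah_alpha A B C D, racah_beta A B C D, racah_gamma A B C D}.
        \<forall>X \<in> {A, B, C, D}. Z * X = X * Z)"

definition invariant_subspace :: "nat \<Rightarrow> 'a::field mat set \<Rightarrow> 'a vec set \<Rightarrow> bool" where
  "invariant_subspace n Ms W \<longleftrightarrow>
     W \<subseteq> carrier_vec n \<and> 0\<^sub>v n \<in> W \<and>
     (\<forall>v\<in>W. \<forall>w\<in>W. v + w \<in> W) \<and> (\<forall>c. \<forall>v\<in>W. c \<cdot>\<^sub>v v \<in> W) \<and>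
     (\<forall>M\<in>Ms. \<forall>v\<in>W. M *\<^sub>v v \<in> W)"

definition irreducible_rep :: "nat \<Rightarrow> 'a::field mat set \<Rightarrow> bool" where
  "irreducible_rep n Ms \<longleftrightarrow> n > 0 \<and>
     (\<forall>W. invariant_subspace n Ms W \<longrightarrow> W = {0\<^sub>v n} \<or> W = carrier_vec n)"

definition poly_mat :: "'a::comm_ring_1 poly \<Rightarrow> 'a mat \<Rightarrow> 'a mat" where
  "poly_mat p M = foldr (\<lambda>c N. c \<cdot>\<^sub>m 1\<^sub>m (dim_row M) + M * N) (coeffs p)
                        (0\<^sub>m (dim_row M) (dim_row M))"

definition is_minimal_polynomial :: "'a::field mat \<Rightarrow> 'a poly \<Rightarrow> bool" where
  "is_minimal_polynomial M p \<longleftrightarrow>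
     lead_coeff p = 1 \<and> poly_mat p M = 0\<^sub>m (dim_row M) (dim_row M) \<and>
     (\<forall>q. q \<noteq> 0 \<and> poly_mat q M = 0\<^sub>m (dim_row M) (dim_row M) \<longrightarrow> degree p \<le> degree q)"

definition diagonalizable :: "'a::field mat \<Rightarrow> bool" where
  "diagonalizable M \<longleftrightarrow> (\<exists>D. diagonal_mat D \<and> similar_mat M D)"

definition alg_closed_type :: "'a::field itself \<Rightarrow> bool" where
  "alg_closed_type _ \<longleftrightarrow> (\<forall>p::'a poly. degree p \<ge> 1 \<longrightarrow> (\<exists>x. poly p x = 0))"

end

theory Submission imports Defs begin

definition m5 :: "'a list list \<Rightarrow> 'a mat" where "m5 = mat_of_rows_list 5"

lemma eq5I: assumes "X \<in> carrier_mat 5 5" "Y \<in> carrier_mat 5 5"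
  "\<forall>i\<in>{0,1,2,3,4}. \<forall>j\<in>{0,1,2,3,4}. X$$(i,j) = Y$$(i,j)" shows "X = Y"
proof (rule eq_matI)
  fix i j assume "i < dim_row Y" "j < dim_col Y"
  then have "i \<in> {0,1,2,3,4}" "j \<in> {0,1,2,3,4}" using assms(2) by auto
  then show "X $$ (i,j) = Y $$ (i,j)" using assms(3) by blast
qed (use assms in auto)

lemma eq5vI: assumes "x \<in> carrier_vec 5" "y \<in> carrier_vec 5"
  "\<forall>i\<in>{0,1,2,3,4}. x$i = y$i" shows "x = y"
proof (rule eq_vecI)
  fix i assume "i < dim_vec y"
  then have "i \<in> {0,1,2,3,4}" using assms(2) by auto
  then show "x $ i = y $ i" using assms(3) by blast
qed (use assms in auto)

lemma m5_dims[simp]: "length xs = 5 \<Longrightarrow> dim_row (m5 xs) = 5" "dim_col (m5 xs) = 5"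
  "length xs = 5 \<Longrightarrow> m5 xs \<in> carrier_mat 5 5"
  by (auto simp: m5_def mat_of_rows_list_def)

lemma m5_idx[simp]: "i < length xs \<Longrightarrow> j < 5 \<Longrightarrow> m5 xs $$ (i,j) = xs ! i ! j"
  by (simp add: m5_def mat_of_rows_list_def)

lemma sum5: "(\<Sum>k<(5::nat). f k) = f 0 + f 1 + f 2 + f 3 + (f 4::'a::comm_monoid_add)"
  by (simp add: eval_nat_numeral add.assoc)

lemma A_m5: "(matA::'a::field_char_0 mat) = m5 [[15/4,0,0,0,0],[1,3/4,0,0,0],[0,1,-1/4,0,0],[0,0,1,3/4,0],[0,0,0,1,15/4]]"
  by (rule eq5I) (auto simp: matA_def mat_of_rows_list_def)

lemma B_m5: "(matB::'a::field_char_0 mat) = m5 [[15/4,-9,0,0,0],[0,3/4,-3/2,0,0],[0,0,-1/4,-3/2,0],[0,0,0,3/4,-9],[0,0,0,0,15/4]]"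
  by (rule eq5I) (auto simp: matB_def mat_of_rows_list_def)

lemma C_m5: "(matC::'a::field_char_0 mat) = m5 [[-9/4,9,0,0,0],[-1,15/4,3/2,0,0],[0,-1,23/4,3/2,0],[0,0,-1,15/4,9],[0,0,0,-1,-9/4]]"
  by (rule eq5I) (auto simp: matC_def mat_of_rows_list_def)

lemma D_m5: "(matD::'a::field_char_0 mat) = m5 [[9/2,-27/2,0,0,0],[3/2,-15/4,-3/4,0,0],[0,1/2,0,3/4,0],[0,0,-1/2,15/4,27/2],[0,0,0,-3/2,-9/2]]"
  by (rule eq5I) (auto simp: matD_def mat_of_rows_list_def)

lemma prod_AB: "(m5 [[15/4,0,0,0,0],[1,3/4,0,0,0],[0,1,-1/4,0,0],[0,0,1,3/4,0],[0,0,0,1,15/4]] :: 'a::field_char_0 mat) * m5 [[15/4,-9,0,0,0],[0,3/4,-3/2,0,0],[0,0,-1/4,-3/2,0],[0,0,0,3/4,-9],[0,0,0,0,15/4]] = m5 [[225/16,-135/4,0,0,0],[15/4,-135/16,-9/8,0,0],[0,3/4,-23/16,3/8,0],[0,0,-1/4,-15/16,-27/4],[0,0,0,3/4,81/16]]"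
  by (rule eq5I) (auto simp: scalar_prod_def sum5 atLeast0LessThan)

lemma prod_BA: "(m5 [[15/4,-9,0,0,0],[0,3/4,-3/2,0,0],[0,0,-1/4,-3/2,0],[0,0,0,3/4,-9],[0,0,0,0,15/4]] :: 'a::field_char_0 mat) * m5 [[15/4,0,0,0,0],[1,3/4,0,0,0],[0,1,-1/4,0,0],[0,0,1,3/4,0],[0,0,0,1,15/4]] = m5 [[81/16,-27/4,0,0,0],[3/4,-15/16,3/8,0,0],[0,-1/4,-23/16,-9/8,0],[0,0,3/4,-135/16,-135/4],[0,0,0,15/4,225/16]]"
  by (rule eq5I) (auto simp: scalar_prod_def sum5 atLeast0LessThan)

lemma prod_BC: "(m5 [[15/4,-9,0,0,0],[0,3/4,-3/2,0,0],[0,0,-1/4,-3/2,0],[0,0,0,3/4,-9],[0,0,0,0,15/4]] :: 'a::field_char_0 mat) * m5 [[-9/4,9,0,0,0],[-1,15/4,3/2,0,0],[0,-1,23/4,3/2,0],[0,0,-1,15/4,9],[0,0,0,-1,-9/4]] = m5 [[9/16,0,-27/2,0,0],[-3/4,69/16,-15/2,-9/4,0],[0,1/4,1/16,-6,-27/2],[0,0,-3/4,189/16,27],[0,0,0,-15/4,-135/16]]"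
  by (rule eq5I) (auto simp: scalar_prod_def sum5 atLeast0LessThan)

lemma prod_CB: "(m5 [[-9/4,9,0,0,0],[-1,15/4,3/2,0,0],[0,-1,23/4,3/2,0],[0,0,-1,15/4,9],[0,0,0,-1,-9/4]] :: 'a::field_char_0 mat) * m5 [[15/4,-9,0,0,0],[0,3/4,-3/2,0,0],[0,0,-1/4,-3/2,0],[0,0,0,3/4,-9],[0,0,0,0,15/4]] = m5 [[-135/16,27,-27/2,0,0],[-15/4,189/16,-6,-9/4,0],[0,-3/4,1/16,-15/2,-27/2],[0,0,1/4,69/16,0],[0,0,0,-3/4,9/16]]"
  by (rule eq5I) (auto simp: scalar_prod_def sum5 atLeast0LessThan)

lemma prod_CA: "(m5 [[-9/4,9,0,0,0],[-1,15/4,3/2,0,0],[0,-1,23/4,3/2,0],[0,0,-1,15/4,9],[0,0,0,-1,-9/4]] :: 'a::field_char_0 mat) * m5 [[15/4,0,0,0,0],[1,3/4,0,0,0],[0,1,-1/4,0,0],[0,0,1,3/4,0],[0,0,0,1,15/4]] = m5 [[9/16,27/4,0,0,0],[0,69/16,-3/8,0,0],[-1,5,1/16,9/8,0],[0,-1,4,189/16,135/4],[0,0,-1,-3,-135/16]]"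
  by (rule eq5I) (auto simp: scalar_prod_def sum5 atLeast0LessThan)

lemma prod_AC: "(m5 [[15/4,0,0,0,0],[1,3/4,0,0,0],[0,1,-1/4,0,0],[0,0,1,3/4,0],[0,0,0,1,15/4]] :: 'a::field_char_0 mat) * m5 [[-9/4,9,0,0,0],[-1,15/4,3/2,0,0],[0,-1,23/4,3/2,0],[0,0,-1,15/4,9],[0,0,0,-1,-9/4]] = m5 [[-135/16,135/4,0,0,0],[-3,189/16,9/8,0,0],[-1,4,1/16,-3/8,0],[0,-1,5,69/16,27/4],[0,0,-1,0,9/16]]"
  by (rule eq5I) (auto simp: scalar_prod_def sum5 atLeast0LessThan)

lemma prod_AD: "(m5 [[15/4,0,0,0,0],[1,3/4,0,0,0],[0,1,-1/4,0,0],[0,0,1,3/4,0],[0,0,0,1,15/4]] :: 'a::field_char_0 mat) * m5 [[9/2,-27/2,0,0,0],[3/2,-15/4,-3/4,0,0],[0,1/2,0,3/4,0],[0,0,-1/2,15/4,27/2],[0,0,0,-3/2,-9/2]] = m5 [[135/8,-405/8,0,0,0],[45/8,-261/16,-9/16,0,0],[3/2,-31/8,-3/4,-3/16,0],[0,1/2,-3/8,57/16,81/8],[0,0,-1/2,-15/8,-27/8]]"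
  by (rule eq5I) (auto simp: scalar_prod_def sum5 atLeast0LessThan)

lemma prod_DA: "(m5 [[9/2,-27/2,0,0,0],[3/2,-15/4,-3/4,0,0],[0,1/2,0,3/4,0],[0,0,-1/2,15/4,27/2],[0,0,0,-3/2,-9/2]] :: 'a::field_char_0 mat) * m5 [[15/4,0,0,0,0],[1,3/4,0,0,0],[0,1,-1/4,0,0],[0,0,1,3/4,0],[0,0,0,1,15/4]] = m5 [[27/8,-81/8,0,0,0],[15/8,-57/16,3/16,0,0],[1/2,3/8,3/4,9/16,0],[0,-1/2,31/8,261/16,405/8],[0,0,-3/2,-45/8,-135/8]]"
  by (rule eq5I) (auto simp: scalar_prod_def sum5 atLeast0LessThan)

lemma prod_BD: "(m5 [[15/4,-9,0,0,0],[0,3/4,-3/2,0,0],[0,0,-1/4,-3/2,0],[0,0,0,3/4,-9],[0,0,0,0,15/4]] :: 'a::field_char_0 mat) * m5 [[9/2,-27/2,0,0,0],[3/2,-15/4,-3/4,0,0],[0,1/2,0,3/4,0],[0,0,-1/2,15/4,27/2],[0,0,0,-3/2,-9/2]] = m5 [[27/8,-135/8,27/4,0,0],[9/8,-57/16,-9/16,-9/8,0],[0,-1/8,3/4,-93/16,-81/4],[0,0,-3/8,261/16,405/8],[0,0,0,-45/8,-135/8]]"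
  by (rule eq5I) (auto simp: scalar_prod_def sum5 atLeast0LessThan)

lemma prod_DB: "(m5 [[9/2,-27/2,0,0,0],[3/2,-15/4,-3/4,0,0],[0,1/2,0,3/4,0],[0,0,-1/2,15/4,27/2],[0,0,0,-3/2,-9/2]] :: 'a::field_char_0 mat) * m5 [[15/4,-9,0,0,0],[0,3/4,-3/2,0,0],[0,0,-1/4,-3/2,0],[0,0,0,3/4,-9],[0,0,0,0,15/4]] = m5 [[135/8,-405/8,81/4,0,0],[45/8,-261/16,93/16,9/8,0],[0,3/8,-3/4,9/16,-27/4],[0,0,1/8,57/16,135/8],[0,0,0,-9/8,-27/8]]"
  by (rule eq5I) (auto simp: scalar_prod_def sum5 atLeast0LessThan)

lemma prod_CD: "(m5 [[-9/4,9,0,0,0],[-1,15/4,3/2,0,0],[0,-1,23/4,3/2,0],[0,0,-1,15/4,9],[0,0,0,-1,-9/4]] :: 'a::field_char_0 mat) * m5 [[9/2,-27/2,0,0,0],[3/2,-15/4,-3/4,0,0],[0,1/2,0,3/4,0],[0,0,-1/2,15/4,27/2],[0,0,0,-3/2,-9/2]] = m5 [[27/8,-27/8,-27/4,0,0],[9/8,3/16,-45/16,9/8,0],[-3/2,53/8,0,159/16,81/4],[0,-1/2,-15/8,-3/16,81/8],[0,0,1/2,-3/8,-27/8]]"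
  by (rule eq5I) (auto simp: scalar_prod_def sum5 atLeast0LessThan)

lemma prod_DC: "(m5 [[9/2,-27/2,0,0,0],[3/2,-15/4,-3/4,0,0],[0,1/2,0,3/4,0],[0,0,-1/2,15/4,27/2],[0,0,0,-3/2,-9/2]] :: 'a::field_char_0 mat) * m5 [[-9/4,9,0,0,0],[-1,15/4,3/2,0,0],[0,-1,23/4,3/2,0],[0,0,-1,15/4,9],[0,0,0,-1,-9/4]] = m5 [[27/8,-81/8,-81/4,0,0],[3/8,3/16,-159/16,-9/8,0],[-1/2,15/8,0,45/16,27/4],[0,1/2,-53/8,-3/16,27/8],[0,0,3/2,-9/8,-27/8]]"
  by (rule eq5I) (auto simp: scalar_prod_def sum5 atLeast0LessThan)

lemma carrA: "(matA::'a::field_char_0 mat) \<in> carrier_mat 5 5" by (simp add: A_m5)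
lemma carrB: "(matB::'a::field_char_0 mat) \<in> carrier_mat 5 5" by (simp add: B_m5)
lemma carrC: "(matC::'a::field_char_0 mat) \<in> carrier_mat 5 5" by (simp add: C_m5)
lemma carrD: "(matD::'a::field_char_0 mat) \<in> carrier_mat 5 5" by (simp add: D_m5)

lemma comAB: "commut (matA::'a::field_char_0 mat) matB = 2 \<cdot>\<^sub>m matD"
  unfolding commut_def A_m5 B_m5 D_m5 prod_AB prod_BA by (rule eq5I) auto
lemma comBC: "commut (matB::'a::field_char_0 mat) matC = 2 \<cdot>\<^sub>m matD"
  unfolding commut_def C_m5 B_m5 D_m5 prod_BC prod_CB by (rule eq5I) auto
lemma comCA: "commut (matC::'a::field_char_0 mat) matA = 2 \<cdot>\<^sub>m matD"
  unfolding commut_def A_m5 C_m5 D_m5 prod_CA prod_AC by (rule eq5I) auto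

lemma alpha0: "racah_alpha (matA::'a::field_char_0 mat) matB matC matD = 0\<^sub>m 5 5"
  unfolding racah_alpha_def commut_def A_m5 B_m5 C_m5 D_m5 prod_AD prod_DA prod_AC prod_BA
  by (rule eq5I) auto
lemma beta0: "racah_beta (matA::'a::field_char_0 mat) matB matC matD = 0\<^sub>m 5 5"
  unfolding racah_beta_def commut_def A_m5 B_m5 C_m5 D_m5 prod_BD prod_DB prod_BA prod_CB
  by (rule eq5I) auto
lemma gamma0: "racah_gamma (matA::'a::field_char_0 mat) matB matC matD = 0\<^sub>m 5 5"
  unfolding racah_gamma_def commut_def A_m5 B_m5 C_m5 D_m5 prod_CD prod_DC prod_CB prod_AC
  by (rule eq5I) auto

lemma rep: "racah_rep 5 (matA::'a::field_char_0 mat) matB matC matD"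
proof -
  have z: "Z * X = X * Z" if "Z = 0\<^sub>m 5 5" "X \<in> carrier_mat 5 5" for Z X :: "'a mat"
    using that by simp
  show ?thesis unfolding racah_rep_def
    using carrA carrB carrC carrD comAB comBC comCA alpha0 beta0 gamma0
    by (auto intro!: z)
qed
lemma shA1: "(m5 [[15/4,0,0,0,0],[1,3/4,0,0,0],[0,1,-1/4,0,0],[0,0,1,3/4,0],[0,0,0,1,15/4]] :: 'a::field_char_0 mat) + (-3/4) \<cdot>\<^sub>m 1\<^sub>m 5 = m5 [[3,0,0,0,0],[1,0,0,0,0],[0,1,-1,0,0],[0,0,1,0,0],[0,0,0,1,3]]"
  by (rule eq5I) auto

lemma shA2: "(m5 [[15/4,0,0,0,0],[1,3/4,0,0,0],[0,1,-1/4,0,0],[0,0,1,3/4,0],[0,0,0,1,15/4]] :: 'a::field_char_0 mat) + (1/4) \<cdot>\<^sub>m 1\<^sub>m 5 = m5 [[4,0,0,0,0],[1,1,0,0,0],[0,1,0,0,0],[0,0,1,1,0],[0,0,0,1,4]]"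
  by (rule eq5I) auto

lemma shA3: "(m5 [[15/4,0,0,0,0],[1,3/4,0,0,0],[0,1,-1/4,0,0],[0,0,1,3/4,0],[0,0,0,1,15/4]] :: 'a::field_char_0 mat) + (-15/4) \<cdot>\<^sub>m 1\<^sub>m 5 = m5 [[0,0,0,0,0],[1,-3,0,0,0],[0,1,-4,0,0],[0,0,1,-3,0],[0,0,0,1,0]]"
  by (rule eq5I) auto

lemma shB1: "(m5 [[15/4,-9,0,0,0],[0,3/4,-3/2,0,0],[0,0,-1/4,-3/2,0],[0,0,0,3/4,-9],[0,0,0,0,15/4]] :: 'a::field_char_0 mat) + (-15/4) \<cdot>\<^sub>m 1\<^sub>m 5 = m5 [[0,-9,0,0,0],[0,-3,-3/2,0,0],[0,0,-4,-3/2,0],[0,0,0,-3,-9],[0,0,0,0,0]]"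
  by (rule eq5I) auto

lemma shB2: "(m5 [[15/4,-9,0,0,0],[0,3/4,-3/2,0,0],[0,0,-1/4,-3/2,0],[0,0,0,3/4,-9],[0,0,0,0,15/4]] :: 'a::field_char_0 mat) + (-3/4) \<cdot>\<^sub>m 1\<^sub>m 5 = m5 [[3,-9,0,0,0],[0,0,-3/2,0,0],[0,0,-1,-3/2,0],[0,0,0,0,-9],[0,0,0,0,3]]"
  by (rule eq5I) auto

lemma shB3: "(m5 [[15/4,-9,0,0,0],[0,3/4,-3/2,0,0],[0,0,-1/4,-3/2,0],[0,0,0,3/4,-9],[0,0,0,0,15/4]] :: 'a::field_char_0 mat) + (1/4) \<cdot>\<^sub>m 1\<^sub>m 5 = m5 [[4,-9,0,0,0],[0,1,-3/2,0,0],[0,0,0,-3/2,0],[0,0,0,1,-9],[0,0,0,0,4]]"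
  by (rule eq5I) auto

lemma prP1: "(m5 [[3,0,0,0,0],[1,0,0,0,0],[0,1,-1,0,0],[0,0,1,0,0],[0,0,0,1,3]] :: 'a::field_char_0 mat) * m5 [[3,0,0,0,0],[1,0,0,0,0],[0,1,-1,0,0],[0,0,1,0,0],[0,0,0,1,3]] = m5 [[9,0,0,0,0],[3,0,0,0,0],[1,-1,1,0,0],[0,1,-1,0,0],[0,0,1,3,9]]"
  by (rule eq5I) (auto simp: scalar_prod_def sum5 atLeast0LessThan)

lemma prP2: "(m5 [[9,0,0,0,0],[3,0,0,0,0],[1,-1,1,0,0],[0,1,-1,0,0],[0,0,1,3,9]] :: 'a::field_char_0 mat) * m5 [[4,0,0,0,0],[1,1,0,0,0],[0,1,0,0,0],[0,0,1,1,0],[0,0,0,1,4]] = m5 [[36,0,0,0,0],[12,0,0,0,0],[3,0,0,0,0],[1,0,0,0,0],[0,1,3,12,36]]"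
  by (rule eq5I) (auto simp: scalar_prod_def sum5 atLeast0LessThan)

lemma prP3: "(m5 [[36,0,0,0,0],[12,0,0,0,0],[3,0,0,0,0],[1,0,0,0,0],[0,1,3,12,36]] :: 'a::field_char_0 mat) * m5 [[0,0,0,0,0],[1,-3,0,0,0],[0,1,-4,0,0],[0,0,1,-3,0],[0,0,0,1,0]] = m5 [[0,0,0,0,0],[0,0,0,0,0],[0,0,0,0,0],[0,0,0,0,0],[1,0,0,0,0]]"
  by (rule eq5I) (auto simp: scalar_prod_def sum5 atLeast0LessThan)

lemma prQ1: "(m5 [[0,0,0,0,0],[0,0,0,0,0],[0,0,0,0,0],[0,0,0,0,0],[1,0,0,0,0]] :: 'a::field_char_0 mat) * m5 [[0,-9,0,0,0],[0,-3,-3/2,0,0],[0,0,-4,-3/2,0],[0,0,0,-3,-9],[0,0,0,0,0]] = m5 [[0,0,0,0,0],[0,0,0,0,0],[0,0,0,0,0],[0,0,0,0,0],[0,-9,0,0,0]]"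
  by (rule eq5I) (auto simp: scalar_prod_def sum5 atLeast0LessThan)

lemma prQ2: "(m5 [[0,0,0,0,0],[0,0,0,0,0],[0,0,0,0,0],[0,0,0,0,0],[0,-9,0,0,0]] :: 'a::field_char_0 mat) * m5 [[3,-9,0,0,0],[0,0,-3/2,0,0],[0,0,-1,-3/2,0],[0,0,0,0,-9],[0,0,0,0,3]] = m5 [[0,0,0,0,0],[0,0,0,0,0],[0,0,0,0,0],[0,0,0,0,0],[0,0,27/2,0,0]]"
  by (rule eq5I) (auto simp: scalar_prod_def sum5 atLeast0LessThan)

lemma prQ3: "(m5 [[0,0,0,0,0],[0,0,0,0,0],[0,0,0,0,0],[0,0,0,0,0],[0,0,27/2,0,0]] :: 'a::field_char_0 mat) * m5 [[4,-9,0,0,0],[0,1,-3/2,0,0],[0,0,0,-3/2,0],[0,0,0,1,-9],[0,0,0,0,4]] = m5 [[0,0,0,0,0],[0,0,0,0,0],[0,0,0,0,0],[0,0,0,0,0],[0,0,0,-81/4,0]]"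
  by (rule eq5I) (auto simp: scalar_prod_def sum5 atLeast0LessThan)

lemma prQ4: "(m5 [[0,0,0,0,0],[0,0,0,0,0],[0,0,0,0,0],[0,0,0,0,0],[0,0,0,-81/4,0]] :: 'a::field_char_0 mat) * m5 [[3,-9,0,0,0],[0,0,-3/2,0,0],[0,0,-1,-3/2,0],[0,0,0,0,-9],[0,0,0,0,3]] = m5 [[0,0,0,0,0],[0,0,0,0,0],[0,0,0,0,0],[0,0,0,0,0],[0,0,0,0,729/4]]"
  by (rule eq5I) (auto simp: scalar_prod_def sum5 atLeast0LessThan)

lemma prR3: "(m5 [[0,-9,0,0,0],[0,-3,-3/2,0,0],[0,0,-4,-3/2,0],[0,0,0,-3,-9],[0,0,0,0,0]] :: 'a::field_char_0 mat) * m5 [[0,0,0,0,0],[0,0,0,0,0],[0,0,0,0,0],[0,0,0,0,0],[0,0,0,0,729/4]] = m5 [[0,0,0,0,0],[0,0,0,0,0],[0,0,0,0,0],[0,0,0,0,-6561/4],[0,0,0,0,0]]"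
  by (rule eq5I) (auto simp: scalar_prod_def sum5 atLeast0LessThan)

lemma prR2: "(m5 [[3,-9,0,0,0],[0,0,-3/2,0,0],[0,0,-1,-3/2,0],[0,0,0,0,-9],[0,0,0,0,3]] :: 'a::field_char_0 mat) * m5 [[0,0,0,0,0],[0,0,0,0,0],[0,0,0,0,0],[0,0,0,0,-6561/4],[0,0,0,0,0]] = m5 [[0,0,0,0,0],[0,0,0,0,0],[0,0,0,0,19683/8],[0,0,0,0,0],[0,0,0,0,0]]"
  by (rule eq5I) (auto simp: scalar_prod_def sum5 atLeast0LessThan)

lemma prR1: "(m5 [[4,-9,0,0,0],[0,1,-3/2,0,0],[0,0,0,-3/2,0],[0,0,0,1,-9],[0,0,0,0,4]] :: 'a::field_char_0 mat) * m5 [[0,0,0,0,0],[0,0,0,0,0],[0,0,0,0,19683/8],[0,0,0,0,0],[0,0,0,0,0]] = m5 [[0,0,0,0,0],[0,0,0,0,-59049/16],[0,0,0,0,0],[0,0,0,0,0],[0,0,0,0,0]]"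
  by (rule eq5I) (auto simp: scalar_prod_def sum5 atLeast0LessThan)

lemma prR0: "(m5 [[3,-9,0,0,0],[0,0,-3/2,0,0],[0,0,-1,-3/2,0],[0,0,0,0,-9],[0,0,0,0,3]] :: 'a::field_char_0 mat) * m5 [[0,0,0,0,0],[0,0,0,0,-59049/16],[0,0,0,0,0],[0,0,0,0,0],[0,0,0,0,0]] = m5 [[0,0,0,0,531441/16],[0,0,0,0,0],[0,0,0,0,0],[0,0,0,0,0],[0,0,0,0,0]]"
  by (rule eq5I) (auto simp: scalar_prod_def sum5 atLeast0LessThan)

inductive_set alg :: "'a::field mat set \<Rightarrow> 'a mat set" for S where
  gen: "M \<in> S \<Longrightarrow> M \<in> alg S"
| one: "1\<^sub>m 5 \<in> alg S"
| mul: "M \<in> alg S \<Longrightarrow> N \<in> alg S \<Longrightarrow> M * N \<in> alg S"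
| add: "M \<in> alg S \<Longrightarrow> N \<in> alg S \<Longrightarrow> M + N \<in> alg S"
| smul: "M \<in> alg S \<Longrightarrow> c \<cdot>\<^sub>m M \<in> alg S"

lemma alg_carrier: assumes "S \<subseteq> carrier_mat 5 5" shows "M \<in> alg S \<Longrightarrow> M \<in> carrier_mat 5 5"
  by (induction M rule: alg.induct) (use assms in auto)

lemma smult_mat_vec: "(M::'a::field mat) \<in> carrier_mat n n \<Longrightarrow> v \<in> carrier_vec n \<Longrightarrow>
   (c \<cdot>\<^sub>m M) *\<^sub>v v = c \<cdot>\<^sub>v (M *\<^sub>v v)"
  by (rule eq_vecI) (auto simp: scalar_prod_def sum_distrib_left mult.assoc)

lemma alg_W:
  assumes inv: "invariant_subspace 5 S W" and S: "S \<subseteq> carrier_mat 5 5"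
  shows "M \<in> alg S \<Longrightarrow> v \<in> W \<Longrightarrow> M *\<^sub>v v \<in> W"
proof (induction M arbitrary: v rule: alg.induct)
  case (gen M) then show ?case using inv unfolding invariant_subspace_def by blast
next
  case one
  then have "v \<in> carrier_vec 5" using inv unfolding invariant_subspace_def by blast
  then show ?case using one by simp
next
  case (mul M N)
  then have "v \<in> carrier_vec 5" using inv unfolding invariant_subspace_def by blast
  moreover have "M \<in> carrier_mat 5 5" "N \<in> carrier_mat 5 5" using mul alg_carrier[OF S] by auto
  ultimately have "(M * N) *\<^sub>v v = M *\<^sub>v (N *\<^sub>v v)" by simp
  then show ?case using mul by simp
next
  case (add M N)
  then have "v \<in> carrier_vec 5" using inv unfolding invariant_subspace_def by blast
  moreover have "M \<in> carrier_mat 5 5" "N \<in> carrier_mat 5 5" using add alg_carrier[OF S] by auto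
  ultimately have "(M + N) *\<^sub>v v = M *\<^sub>v v + N *\<^sub>v v" by (simp add: add_mult_distrib_mat_vec)
  then show ?case using add inv unfolding invariant_subspace_def by simp
next
  case (smul M c)
  then have "v \<in> carrier_vec 5" using inv unfolding invariant_subspace_def by blast
  moreover have "M \<in> carrier_mat 5 5" using smul alg_carrier[OF S] by auto
  ultimately have "(c \<cdot>\<^sub>m M) *\<^sub>v v = c \<cdot>\<^sub>v (M *\<^sub>v v)" by (simp add: smult_mat_vec)
  then show ?case using smul inv unfolding invariant_subspace_def by simp
qed


lemma m5_mv[simp]: "length xs = 5 \<Longrightarrow> m5 xs *\<^sub>v v \<in> carrier_vec 5"
  unfolding carrier_vec_def by simp

lemma m5_mult_vec: "length xs = 5 \<Longrightarrow> i < 5 \<Longrightarrow> dim_vec v = 5 \<Longrightarrow>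
  (m5 xs *\<^sub>v v) $ i = xs!i!0 * v$0 + xs!i!1 * v$1 + xs!i!2 * v$2 + xs!i!3 * v$3 + xs!i!4 * v$4"
  apply (simp add: scalar_prod_def)
  apply (simp only: atLeast0LessThan sum5)
  apply simp
  done

lemma Qv0: "(v::'a::field_char_0 vec) \<in> carrier_vec 5 \<Longrightarrow> m5 [[0,0,0,0,0],[0,0,0,0,0],[0,0,0,0,0],[0,0,0,0,0],[1,0,0,0,0]] *\<^sub>v v = ((1) * v $ 0) \<cdot>\<^sub>v unit_vec 5 4"
  by (rule eq5vI) (auto simp del: index_mult_mat_vec simp: m5_mult_vec)

lemma Qv1: "(v::'a::field_char_0 vec) \<in> carrier_vec 5 \<Longrightarrow> m5 [[0,0,0,0,0],[0,0,0,0,0],[0,0,0,0,0],[0,0,0,0,0],[0,-9,0,0,0]] *\<^sub>v v = ((-9) * v $ 1) \<cdot>\<^sub>v unit_vec 5 4"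
  by (rule eq5vI) (auto simp del: index_mult_mat_vec simp: m5_mult_vec)

lemma Qv2: "(v::'a::field_char_0 vec) \<in> carrier_vec 5 \<Longrightarrow> m5 [[0,0,0,0,0],[0,0,0,0,0],[0,0,0,0,0],[0,0,0,0,0],[0,0,27/2,0,0]] *\<^sub>v v = ((27/2) * v $ 2) \<cdot>\<^sub>v unit_vec 5 4"
  by (rule eq5vI) (auto simp del: index_mult_mat_vec simp: m5_mult_vec)

lemma Qv3: "(v::'a::field_char_0 vec) \<in> carrier_vec 5 \<Longrightarrow> m5 [[0,0,0,0,0],[0,0,0,0,0],[0,0,0,0,0],[0,0,0,0,0],[0,0,0,-81/4,0]] *\<^sub>v v = ((-81/4) * v $ 3) \<cdot>\<^sub>v unit_vec 5 4"
  by (rule eq5vI) (auto simp del: index_mult_mat_vec simp: m5_mult_vec)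

lemma Qv4: "(v::'a::field_char_0 vec) \<in> carrier_vec 5 \<Longrightarrow> m5 [[0,0,0,0,0],[0,0,0,0,0],[0,0,0,0,0],[0,0,0,0,0],[0,0,0,0,729/4]] *\<^sub>v v = ((729/4) * v $ 4) \<cdot>\<^sub>v unit_vec 5 4"
  by (rule eq5vI) (auto simp del: index_mult_mat_vec simp: m5_mult_vec)

lemma Umat: "(((u::'a::field_char_0 vec) $ 0 / (531441/16)) \<cdot>\<^sub>m m5 [[0,0,0,0,531441/16],[0,0,0,0,0],[0,0,0,0,0],[0,0,0,0,0],[0,0,0,0,0]] + (u $ 1 / (-59049/16)) \<cdot>\<^sub>m m5 [[0,0,0,0,0],[0,0,0,0,-59049/16],[0,0,0,0,0],[0,0,0,0,0],[0,0,0,0,0]] + (u $ 2 / (19683/8)) \<cdot>\<^sub>m m5 [[0,0,0,0,0],[0,0,0,0,0],[0,0,0,0,19683/8],[0,0,0,0,0],[0,0,0,0,0]] + (u $ 3 / (-6561/4)) \<cdot>\<^sub>m m5 [[0,0,0,0,0],[0,0,0,0,0],[0,0,0,0,0],[0,0,0,0,-6561/4],[0,0,0,0,0]] + (u $ 4 / (729/4)) \<cdot>\<^sub>m m5 [[0,0,0,0,0],[0,0,0,0,0],[0,0,0,0,0],[0,0,0,0,0],[0,0,0,0,729/4]]) = m5 [[0,0,0,0,u $ 0],[0,0,0,0,u $ 1],[0,0,0,0,u $ 2],[0,0,0,0,u $ 3],[0,0,0,0,u $ 4]]"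
  by (rule eq5I) auto

lemma Uv: "(u::'a::field_char_0 vec) \<in> carrier_vec 5 \<Longrightarrow> ((u $ 0 / (531441/16)) \<cdot>\<^sub>m m5 [[0,0,0,0,531441/16],[0,0,0,0,0],[0,0,0,0,0],[0,0,0,0,0],[0,0,0,0,0]] + (u $ 1 / (-59049/16)) \<cdot>\<^sub>m m5 [[0,0,0,0,0],[0,0,0,0,-59049/16],[0,0,0,0,0],[0,0,0,0,0],[0,0,0,0,0]] + (u $ 2 / (19683/8)) \<cdot>\<^sub>m m5 [[0,0,0,0,0],[0,0,0,0,0],[0,0,0,0,19683/8],[0,0,0,0,0],[0,0,0,0,0]] + (u $ 3 / (-6561/4)) \<cdot>\<^sub>m m5 [[0,0,0,0,0],[0,0,0,0,0],[0,0,0,0,0],[0,0,0,0,-6561/4],[0,0,0,0,0]] + (u $ 4 / (729/4)) \<cdot>\<^sub>m m5 [[0,0,0,0,0],[0,0,0,0,0],[0,0,0,0,0],[0,0,0,0,0],[0,0,0,0,729/4]]) *\<^sub>v unit_vec 5 4 = u"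
  unfolding Umat by (rule eq5vI) (auto simp del: index_mult_mat_vec simp: m5_mult_vec)
lemma irr: "irreducible_rep 5 {matA::'a::field_char_0 mat, matB, matC, matD}"
  unfolding irreducible_rep_def
proof (intro conjI allI impI)
  fix W :: "'a vec set"
  let ?S = "{matA::'a mat, matB, matC, matD}"
  assume inv: "invariant_subspace 5 ?S W"
  have S: "?S \<subseteq> carrier_mat 5 5" using carrA carrB carrC carrD by auto
  have Wc: "W \<subseteq> carrier_vec 5" and W0: "0\<^sub>v 5 \<in> W"
    and Wsm: "\<And>c v. v \<in> W \<Longrightarrow> c \<cdot>\<^sub>v v \<in> W"
    using inv unfolding invariant_subspace_def by auto
  note aW = alg_W[OF inv S]
  have hA: "m5 [[15/4,0,0,0,0],[1,3/4,0,0,0],[0,1,-1/4,0,0],[0,0,1,3/4,0],[0,0,0,1,15/4]] \<in> alg ?S" using alg.gen[of matA ?S] by (simp add: A_m5)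
  have hB: "m5 [[15/4,-9,0,0,0],[0,3/4,-3/2,0,0],[0,0,-1/4,-3/2,0],[0,0,0,3/4,-9],[0,0,0,0,15/4]] \<in> alg ?S" using alg.gen[of matB ?S] by (simp add: B_m5)
  have sh: "\<And>X c Y. m5 X \<in> alg ?S \<Longrightarrow> m5 X + c \<cdot>\<^sub>m 1\<^sub>m 5 = m5 Y \<Longrightarrow> m5 Y \<in> alg ?S"
    by (metis alg.add alg.one alg.smul)
  have mu: "\<And>X Y Z. m5 X \<in> alg ?S \<Longrightarrow> m5 Y \<in> alg ?S \<Longrightarrow> m5 X * m5 Y = m5 Z \<Longrightarrow> m5 Z \<in> alg ?S"
    by (metis alg.mul)
  have a1: "m5 [[3,0,0,0,0],[1,0,0,0,0],[0,1,-1,0,0],[0,0,1,0,0],[0,0,0,1,3]] \<in> alg ?S" by (rule sh[OF hA shA1])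
  have a2: "m5 [[4,0,0,0,0],[1,1,0,0,0],[0,1,0,0,0],[0,0,1,1,0],[0,0,0,1,4]] \<in> alg ?S" by (rule sh[OF hA shA2])
  have a3: "m5 [[0,0,0,0,0],[1,-3,0,0,0],[0,1,-4,0,0],[0,0,1,-3,0],[0,0,0,1,0]] \<in> alg ?S" by (rule sh[OF hA shA3])
  have b1: "m5 [[0,-9,0,0,0],[0,-3,-3/2,0,0],[0,0,-4,-3/2,0],[0,0,0,-3,-9],[0,0,0,0,0]] \<in> alg ?S" by (rule sh[OF hB shB1])
  have b2: "m5 [[3,-9,0,0,0],[0,0,-3/2,0,0],[0,0,-1,-3/2,0],[0,0,0,0,-9],[0,0,0,0,3]] \<in> alg ?S" by (rule sh[OF hB shB2])
  have b3: "m5 [[4,-9,0,0,0],[0,1,-3/2,0,0],[0,0,0,-3/2,0],[0,0,0,1,-9],[0,0,0,0,4]] \<in> alg ?S" by (rule sh[OF hB shB3])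
  have p1: "m5 [[9,0,0,0,0],[3,0,0,0,0],[1,-1,1,0,0],[0,1,-1,0,0],[0,0,1,3,9]] \<in> alg ?S" by (rule mu[OF a1 a1 prP1])
  have p2: "m5 [[36,0,0,0,0],[12,0,0,0,0],[3,0,0,0,0],[1,0,0,0,0],[0,1,3,12,36]] \<in> alg ?S" by (rule mu[OF p1 a2 prP2])
  have q0: "m5 [[0,0,0,0,0],[0,0,0,0,0],[0,0,0,0,0],[0,0,0,0,0],[1,0,0,0,0]] \<in> alg ?S" by (rule mu[OF p2 a3 prP3])
  have q1: "m5 [[0,0,0,0,0],[0,0,0,0,0],[0,0,0,0,0],[0,0,0,0,0],[0,-9,0,0,0]] \<in> alg ?S" by (rule mu[OF q0 b1 prQ1])
  have q2: "m5 [[0,0,0,0,0],[0,0,0,0,0],[0,0,0,0,0],[0,0,0,0,0],[0,0,27/2,0,0]] \<in> alg ?S" by (rule mu[OF q1 b2 prQ2])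
  have q3: "m5 [[0,0,0,0,0],[0,0,0,0,0],[0,0,0,0,0],[0,0,0,0,0],[0,0,0,-81/4,0]] \<in> alg ?S" by (rule mu[OF q2 b3 prQ3])
  have q4: "m5 [[0,0,0,0,0],[0,0,0,0,0],[0,0,0,0,0],[0,0,0,0,0],[0,0,0,0,729/4]] \<in> alg ?S" by (rule mu[OF q3 b2 prQ4])
  have r3: "m5 [[0,0,0,0,0],[0,0,0,0,0],[0,0,0,0,0],[0,0,0,0,-6561/4],[0,0,0,0,0]] \<in> alg ?S" by (rule mu[OF b1 q4 prR3])
  have r2: "m5 [[0,0,0,0,0],[0,0,0,0,0],[0,0,0,0,19683/8],[0,0,0,0,0],[0,0,0,0,0]] \<in> alg ?S" by (rule mu[OF b2 r3 prR2])
  have r1: "m5 [[0,0,0,0,0],[0,0,0,0,-59049/16],[0,0,0,0,0],[0,0,0,0,0],[0,0,0,0,0]] \<in> alg ?S" by (rule mu[OF b3 r2 prR1])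
  have r0: "m5 [[0,0,0,0,531441/16],[0,0,0,0,0],[0,0,0,0,0],[0,0,0,0,0],[0,0,0,0,0]] \<in> alg ?S" by (rule mu[OF b2 r1 prR0])
  show "W = {0\<^sub>v 5} \<or> W = carrier_vec 5"
  proof (cases "W = {0\<^sub>v 5}")
  case True then show ?thesis by simp
  next
  case False
  then obtain v where vW: "v \<in> W" and v0: "v \<noteq> 0\<^sub>v 5" using W0 by blast
  have vc: "v \<in> carrier_vec 5" using vW Wc by blast
  obtain j where j: "j \<in> {0,1,2,3,4}" "v $ j \<noteq> 0"
  proof -
    have "\<not> (\<forall>i\<in>{0,1,2,3,4}. v $ i = 0\<^sub>v 5 $ i)"
      using eq5vI[OF vc, of "0\<^sub>v 5"] v0 by auto
    then show ?thesis using that by auto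
  qed
  have "\<exists>Q\<in>alg ?S. \<exists>k::'a. k \<noteq> 0 \<and> Q *\<^sub>v v = (k * v $ j) \<cdot>\<^sub>v unit_vec 5 4"
  proof -
    from j(1) consider "j = 0" | "j = 1" | "j = 2" | "j = 3" | "j = 4" by blast
    then show ?thesis
    proof cases
      case 1 show ?thesis using q0 Qv0[OF vc] unfolding \<open>j = 0\<close> by (intro bexI[OF _ q0] exI[of _ "1"]) simp
    next
      case 2 show ?thesis using q1 Qv1[OF vc] unfolding \<open>j = 1\<close> by (intro bexI[OF _ q1] exI[of _ "-9"]) simp
    next
      case 3 show ?thesis using q2 Qv2[OF vc] unfolding \<open>j = 2\<close> by (intro bexI[OF _ q2] exI[of _ "27/2"]) simp
    next
      case 4 show ?thesis using q3 Qv3[OF vc] unfolding \<open>j = 3\<close> by (intro bexI[OF _ q3] exI[of _ "-81/4"]) simp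
    next
      case 5 show ?thesis using q4 Qv4[OF vc] unfolding \<open>j = 4\<close> by (intro bexI[OF _ q4] exI[of _ "729/4"]) simp
    qed
  qed
  then obtain Q and k :: 'a where Q: "Q \<in> alg ?S" "k \<noteq> 0" "Q *\<^sub>v v = (k * v $ j) \<cdot>\<^sub>v unit_vec 5 4"
    by blast
  have "(1 / (k * v $ j)) \<cdot>\<^sub>v (Q *\<^sub>v v) \<in> W" using Wsm aW[OF Q(1) vW] by blast
  moreover have "(1 / (k * v $ j)) \<cdot>\<^sub>v (Q *\<^sub>v v) = unit_vec 5 4"
    using Q(2,3) j(2) by (simp add: smult_smult_assoc)
  ultimately have e4: "unit_vec 5 4 \<in> W" by simp
  have "W = carrier_vec 5"
  proof
    show "W \<subseteq> carrier_vec 5" by (rule Wc)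
    show "carrier_vec 5 \<subseteq> W"
    proof
      fix u :: "'a vec" assume u: "u \<in> carrier_vec 5"
      have "((u $ 0 / (531441/16)) \<cdot>\<^sub>m m5 [[0,0,0,0,531441/16],[0,0,0,0,0],[0,0,0,0,0],[0,0,0,0,0],[0,0,0,0,0]] + (u $ 1 / (-59049/16)) \<cdot>\<^sub>m m5 [[0,0,0,0,0],[0,0,0,0,-59049/16],[0,0,0,0,0],[0,0,0,0,0],[0,0,0,0,0]] + (u $ 2 / (19683/8)) \<cdot>\<^sub>m m5 [[0,0,0,0,0],[0,0,0,0,0],[0,0,0,0,19683/8],[0,0,0,0,0],[0,0,0,0,0]] + (u $ 3 / (-6561/4)) \<cdot>\<^sub>m m5 [[0,0,0,0,0],[0,0,0,0,0],[0,0,0,0,0],[0,0,0,0,-6561/4],[0,0,0,0,0]] + (u $ 4 / (729/4)) \<cdot>\<^sub>m m5 [[0,0,0,0,0],[0,0,0,0,0],[0,0,0,0,0],[0,0,0,0,0],[0,0,0,0,729/4]]) \<in> alg ?S"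
        by (intro alg.add alg.smul r0 r1 r2 r3 q4)
      from aW[OF this e4] show "u \<in> W" unfolding Uv[OF u] .
    qed
  qed
  then show ?thesis by simp
  qed
qed simp

lemma poly_mat_0: "M \<in> carrier_mat n n \<Longrightarrow> poly_mat 0 M = 0\<^sub>m n n"
  by (simp add: poly_mat_def)

lemma poly_mat_pCons: assumes "(M::'a::comm_ring_1 mat) \<in> carrier_mat n n"
  shows "poly_mat (pCons a p) M = a \<cdot>\<^sub>m 1\<^sub>m n + M * poly_mat p M"
proof (cases "a = 0 \<and> p = 0")
  case True
  then show ?thesis using assms by (auto simp: poly_mat_def intro!: eq_matI)
next
  case False
  then have "coeffs (pCons a p) = a # coeffs p" by (auto simp: cCons_def)
  then show ?thesis using assms by (simp add: poly_mat_def)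
qed

lemma poly_mat_carrier: "(M::'a::comm_ring_1 mat) \<in> carrier_mat n n \<Longrightarrow> poly_mat p M \<in> carrier_mat n n"
  by (induction p rule: pCons_induct) (auto simp: poly_mat_0 poly_mat_pCons)

lemma deg4_form: "degree (q::'a::zero poly) \<le> 4 \<Longrightarrow>
  q = pCons (coeff q 0) (pCons (coeff q 1) (pCons (coeff q 2) (pCons (coeff q 3) (pCons (coeff q 4) 0))))"
  apply (rule poly_eqI)
  subgoal for n
    apply (cases n, simp)
    apply (rename_tac n1, case_tac n1, simp)
    apply (rename_tac n2, case_tac n2, simp add: numeral_2_eq_2)
    apply (rename_tac n3, case_tac n3, simp add: numeral_3_eq_3)
    apply (rename_tac n4, case_tac n4, simp add: eval_nat_numeral)
    apply (auto simp: eval_nat_numeral coeff_eq_0)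
    done
  done

lemma hv: "M \<in> carrier_mat n n \<Longrightarrow> N \<in> carrier_mat n n \<Longrightarrow> (e::'a::field vec) \<in> carrier_vec n \<Longrightarrow>
  (a \<cdot>\<^sub>m 1\<^sub>m n + M * N) *\<^sub>v e = a \<cdot>\<^sub>v e + M *\<^sub>v (N *\<^sub>v e)"
proof -
  assume a: "M \<in> carrier_mat n n" "N \<in> carrier_mat n n" "e \<in> carrier_vec n"
  have "(a \<cdot>\<^sub>m 1\<^sub>m n + M * N) *\<^sub>v e = (a \<cdot>\<^sub>m 1\<^sub>m n) *\<^sub>v e + (M * N) *\<^sub>v e"
    by (rule add_mult_distrib_mat_vec) (use a in auto)
  also have "\<dots> = a \<cdot>\<^sub>v e + M *\<^sub>v (N *\<^sub>v e)"
    using smult_mat_vec[of "1\<^sub>m n" n e a] a by simp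
  finally show ?thesis .
qed

lemma smult_one_mv: "(e::'a::field vec) \<in> carrier_vec n \<Longrightarrow> (a \<cdot>\<^sub>m 1\<^sub>m n) *\<^sub>v e = a \<cdot>\<^sub>v e"
  using smult_mat_vec[of "1\<^sub>m n" n e a] by simp

lemma lower_generic:
  fixes M :: "'a::field mat"
  assumes M: "M \<in> carrier_mat 5 5" and e: "e \<in> carrier_vec 5"
  and sol: "\<And>q0 q1 q2 q3 q4. q0 \<cdot>\<^sub>v e + M *\<^sub>v (q1 \<cdot>\<^sub>v e + M *\<^sub>v (q2 \<cdot>\<^sub>v e + M *\<^sub>v (q3 \<cdot>\<^sub>v e + M *\<^sub>v (q4 \<cdot>\<^sub>v e)))) = 0\<^sub>v 5
     \<Longrightarrow> q0 = 0 \<and> q1 = 0 \<and> q2 = 0 \<and> q3 = 0 \<and> q4 = 0"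
  and q: "q \<noteq> 0" "poly_mat q M = 0\<^sub>m 5 5"
  shows "5 \<le> degree q"
proof (rule ccontr)
  assume "\<not> 5 \<le> degree q"
  then have qf: "q = pCons (coeff q 0) (pCons (coeff q 1) (pCons (coeff q 2) (pCons (coeff q 3) (pCons (coeff q 4) 0))))"
    by (intro deg4_form) simp
  have "poly_mat q M *\<^sub>v e = 0\<^sub>v 5" using q(2) e by (auto intro!: eq_vecI simp: scalar_prod_def)
  then have "coeff q 0 \<cdot>\<^sub>v e + M *\<^sub>v (coeff q 1 \<cdot>\<^sub>v e + M *\<^sub>v (coeff q 2 \<cdot>\<^sub>v e + M *\<^sub>v (coeff q 3 \<cdot>\<^sub>v e + M *\<^sub>v (coeff q 4 \<cdot>\<^sub>v e)))) = 0\<^sub>v 5"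
    using M e by (subst (asm) qf) (simp add: poly_mat_pCons poly_mat_0 hv poly_mat_carrier smult_one_mv)
  from sol[OF this] have "coeff q 0 = 0" "coeff q 1 = 0" "coeff q 2 = 0" "coeff q 3 = 0" "coeff q 4 = 0" by auto
  then have "q = 0" by (subst qf) simp
  with q(1) show False by simp
qed

lemma p_exp: "([:1/4, 1:] * [:-3/4, 1:]^2 * [:-15/4, 1:]^2 :: 'a::field_char_0 poly)
  = pCons (2025/1024) (pCons (405/256) (pCons (-603/32) (pCons (189/8) (pCons (-35/4) (pCons 1 0)))))"
  by (simp add: power2_eq_square)

lemma p_deg: "degree ([:1/4, 1:] * [:-3/4, 1:]^2 * [:-15/4, 1:]^2 :: 'a::field_char_0 poly) = 5"
  unfolding p_exp by simp
lemma p_lc: "lead_coeff ([:1/4, 1:] * [:-3/4, 1:]^2 * [:-15/4, 1:]^2 :: 'a::field_char_0 poly) = 1"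
  unfolding p_exp by simp

lemma Ah5: "(1::'a::field_char_0) \<cdot>\<^sub>m 1\<^sub>m 5 + m5 [[15/4,0,0,0,0],[1,3/4,0,0,0],[0,1,-1/4,0,0],[0,0,1,3/4,0],[0,0,0,1,15/4]] * 0\<^sub>m 5 5 = m5 [[1,0,0,0,0],[0,1,0,0,0],[0,0,1,0,0],[0,0,0,1,0],[0,0,0,0,1]]"
  by (rule eq5I) auto

lemma Ah4: "(-35/4::'a::field_char_0) \<cdot>\<^sub>m 1\<^sub>m 5 + m5 [[15/4,0,0,0,0],[1,3/4,0,0,0],[0,1,-1/4,0,0],[0,0,1,3/4,0],[0,0,0,1,15/4]] * m5 [[1,0,0,0,0],[0,1,0,0,0],[0,0,1,0,0],[0,0,0,1,0],[0,0,0,0,1]] = m5 [[-5,0,0,0,0],[1,-8,0,0,0],[0,1,-9,0,0],[0,0,1,-8,0],[0,0,0,1,-5]]"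
  by (rule eq5I) (auto simp: scalar_prod_def sum5 atLeast0LessThan)

lemma Ah3: "(189/8::'a::field_char_0) \<cdot>\<^sub>m 1\<^sub>m 5 + m5 [[15/4,0,0,0,0],[1,3/4,0,0,0],[0,1,-1/4,0,0],[0,0,1,3/4,0],[0,0,0,1,15/4]] * m5 [[-5,0,0,0,0],[1,-8,0,0,0],[0,1,-9,0,0],[0,0,1,-8,0],[0,0,0,1,-5]] = m5 [[39/8,0,0,0,0],[-17/4,141/8,0,0,0],[1,-33/4,207/8,0,0],[0,1,-33/4,141/8,0],[0,0,1,-17/4,39/8]]"
  by (rule eq5I) (auto simp: scalar_prod_def sum5 atLeast0LessThan)

lemma Ah2: "(-603/32::'a::field_char_0) \<cdot>\<^sub>m 1\<^sub>m 5 + m5 [[15/4,0,0,0,0],[1,3/4,0,0,0],[0,1,-1/4,0,0],[0,0,1,3/4,0],[0,0,0,1,15/4]] * m5 [[39/8,0,0,0,0],[-17/4,141/8,0,0,0],[1,-33/4,207/8,0,0],[0,1,-33/4,141/8,0],[0,0,1,-17/4,39/8]] = m5 [[-9/16,0,0,0,0],[27/16,-45/8,0,0,0],[-9/2,315/16,-405/16,0,0],[1,-15/2,315/16,-45/8,0],[0,1,-9/2,27/16,-9/16]]"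
  by (rule eq5I) (auto simp: scalar_prod_def sum5 atLeast0LessThan)

lemma Ah1: "(405/256::'a::field_char_0) \<cdot>\<^sub>m 1\<^sub>m 5 + m5 [[15/4,0,0,0,0],[1,3/4,0,0,0],[0,1,-1/4,0,0],[0,0,1,3/4,0],[0,0,0,1,15/4]] * m5 [[-9/16,0,0,0,0],[27/16,-45/8,0,0,0],[-9/2,315/16,-405/16,0,0],[1,-15/2,315/16,-45/8,0],[0,1,-9/2,27/16,-9/16]] = m5 [[-135/256,0,0,0,0],[45/64,-675/256,0,0,0],[45/16,-675/64,2025/256,0,0],[-15/4,225/16,-675/64,-675/256,0],[1,-15/4,45/16,45/64,-135/256]]"
  by (rule eq5I) (auto simp: scalar_prod_def sum5 atLeast0LessThan)

lemma Ah0: "(2025/1024::'a::field_char_0) \<cdot>\<^sub>m 1\<^sub>m 5 + m5 [[15/4,0,0,0,0],[1,3/4,0,0,0],[0,1,-1/4,0,0],[0,0,1,3/4,0],[0,0,0,1,15/4]] * m5 [[-135/256,0,0,0,0],[45/64,-675/256,0,0,0],[45/16,-675/64,2025/256,0,0],[-15/4,225/16,-675/64,-675/256,0],[1,-15/4,45/16,45/64,-135/256]] = m5 [[0,0,0,0,0],[0,0,0,0,0],[0,0,0,0,0],[0,0,0,0,0],[0,0,0,0,0]]"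
  by (rule eq5I) (auto simp: scalar_prod_def sum5 atLeast0LessThan)

lemma A_ann: "poly_mat ([:1/4, 1:] * [:-3/4, 1:]^2 * [:-15/4, 1:]^2) (matA::'a::field_char_0 mat) = 0\<^sub>m 5 5"
proof -
  have c: "(m5 [[15/4,0,0,0,0],[1,3/4,0,0,0],[0,1,-1/4,0,0],[0,0,1,3/4,0],[0,0,0,1,15/4]] :: 'a::field_char_0 mat) \<in> carrier_mat 5 5" by simp
  have "poly_mat ([:1/4, 1:] * [:-3/4, 1:]^2 * [:-15/4, 1:]^2) (matA::'a::field_char_0 mat) = m5 [[0,0,0,0,0],[0,0,0,0,0],[0,0,0,0,0],[0,0,0,0,0],[0,0,0,0,0]]"
    unfolding A_m5 p_exp by (simp only: poly_mat_pCons[OF c] poly_mat_0[OF c] Ah5 Ah4 Ah3 Ah2 Ah1 Ah0)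
  also have "(m5 [[0,0,0,0,0],[0,0,0,0,0],[0,0,0,0,0],[0,0,0,0,0],[0,0,0,0,0]] :: 'a::field_char_0 mat) = 0\<^sub>m 5 5" by (rule eq5I) auto
  finally show ?thesis .
qed

lemma A_sol: "\<And>q0 q1 q2 q3 q4. q0 \<cdot>\<^sub>v unit_vec 5 0 + m5 [[15/4,0,0,0,0],[1,3/4,0,0,0],[0,1,-1/4,0,0],[0,0,1,3/4,0],[0,0,0,1,15/4]] *\<^sub>v (q1 \<cdot>\<^sub>v unit_vec 5 0 + m5 [[15/4,0,0,0,0],[1,3/4,0,0,0],[0,1,-1/4,0,0],[0,0,1,3/4,0],[0,0,0,1,15/4]] *\<^sub>v (q2 \<cdot>\<^sub>v unit_vec 5 0 + m5 [[15/4,0,0,0,0],[1,3/4,0,0,0],[0,1,-1/4,0,0],[0,0,1,3/4,0],[0,0,0,1,15/4]] *\<^sub>v (q3 \<cdot>\<^sub>v unit_vec 5 0 + m5 [[15/4,0,0,0,0],[1,3/4,0,0,0],[0,1,-1/4,0,0],[0,0,1,3/4,0],[0,0,0,1,15/4]] *\<^sub>v (q4 \<cdot>\<^sub>v unit_vec 5 0)))) = (0\<^sub>v 5 :: 'a::field_char_0 vec)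
     \<Longrightarrow> q0 = 0 \<and> q1 = 0 \<and> q2 = 0 \<and> q3 = 0 \<and> q4 = 0"
proof -
  fix q0 q1 q2 q3 q4 :: 'a
  assume h: "q0 \<cdot>\<^sub>v unit_vec 5 0 + m5 [[15/4,0,0,0,0],[1,3/4,0,0,0],[0,1,-1/4,0,0],[0,0,1,3/4,0],[0,0,0,1,15/4]] *\<^sub>v (q1 \<cdot>\<^sub>v unit_vec 5 0 + m5 [[15/4,0,0,0,0],[1,3/4,0,0,0],[0,1,-1/4,0,0],[0,0,1,3/4,0],[0,0,0,1,15/4]] *\<^sub>v (q2 \<cdot>\<^sub>v unit_vec 5 0 + m5 [[15/4,0,0,0,0],[1,3/4,0,0,0],[0,1,-1/4,0,0],[0,0,1,3/4,0],[0,0,0,1,15/4]] *\<^sub>v (q3 \<cdot>\<^sub>v unit_vec 5 0 + m5 [[15/4,0,0,0,0],[1,3/4,0,0,0],[0,1,-1/4,0,0],[0,0,1,3/4,0],[0,0,0,1,15/4]] *\<^sub>v (q4 \<cdot>\<^sub>v unit_vec 5 0)))) = (0\<^sub>v 5 :: 'a::field_char_0 vec)"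
  have h4: "q4 = 0" using arg_cong[OF h, of "\<lambda>x. x $ 4"] by (simp del: index_mult_mat_vec add: m5_mult_vec)
  have h3: "q3 = 0" using arg_cong[OF h, of "\<lambda>x. x $ 3"] h4 by (simp del: index_mult_mat_vec add: m5_mult_vec)
  have h2: "q2 = 0" using arg_cong[OF h, of "\<lambda>x. x $ 2"] h4 h3 by (simp del: index_mult_mat_vec add: m5_mult_vec)
  have h1: "q1 = 0" using arg_cong[OF h, of "\<lambda>x. x $ 1"] h4 h3 h2 by (simp del: index_mult_mat_vec add: m5_mult_vec)
  have h0: "q0 = 0" using arg_cong[OF h, of "\<lambda>x. x $ 0"] h4 h3 h2 h1 by (simp del: index_mult_mat_vec add: m5_mult_vec)
  show "q0 = 0 \<and> q1 = 0 \<and> q2 = 0 \<and> q3 = 0 \<and> q4 = 0" using h0 h1 h2 h3 h4 by simp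
qed

lemma A_low: "q \<noteq> 0 \<Longrightarrow> poly_mat q (matA::'a::field_char_0 mat) = 0\<^sub>m 5 5 \<Longrightarrow> 5 \<le> degree q"
  unfolding A_m5 by (rule lower_generic[OF _ _ A_sol]) auto

lemma A_min: "is_minimal_polynomial (matA::'a::field_char_0 mat) ([:1/4, 1:] * [:-3/4, 1:]^2 * [:-15/4, 1:]^2)"
  unfolding is_minimal_polynomial_def
proof (intro conjI allI impI)
  have d: "dim_row (matA::'a::field_char_0 mat) = 5" by (simp add: A_m5)
  show "lead_coeff ([:1/4, 1:] * [:-3/4, 1:]^2 * [:-15/4, 1:]^2 :: 'a poly) = 1" by (rule p_lc)
  show "poly_mat ([:1/4, 1:] * [:-3/4, 1:]^2 * [:-15/4, 1:]^2) (matA::'a::field_char_0 mat) = 0\<^sub>m (dim_row (matA::'a::field_char_0 mat)) (dim_row (matA::'a::field_char_0 mat))"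
    unfolding d by (rule A_ann)
  fix q :: "'a poly"
  assume "q \<noteq> 0 \<and> poly_mat q (matA::'a::field_char_0 mat) = 0\<^sub>m (dim_row (matA::'a::field_char_0 mat)) (dim_row (matA::'a::field_char_0 mat))"
  then show "degree ([:1/4, 1:] * [:-3/4, 1:]^2 * [:-15/4, 1:]^2 :: 'a poly) \<le> degree q"
    using A_low[of q] unfolding d p_deg by auto
qed

lemma Bh5: "(1::'a::field_char_0) \<cdot>\<^sub>m 1\<^sub>m 5 + m5 [[15/4,-9,0,0,0],[0,3/4,-3/2,0,0],[0,0,-1/4,-3/2,0],[0,0,0,3/4,-9],[0,0,0,0,15/4]] * 0\<^sub>m 5 5 = m5 [[1,0,0,0,0],[0,1,0,0,0],[0,0,1,0,0],[0,0,0,1,0],[0,0,0,0,1]]"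
  by (rule eq5I) auto

lemma Bh4: "(-35/4::'a::field_char_0) \<cdot>\<^sub>m 1\<^sub>m 5 + m5 [[15/4,-9,0,0,0],[0,3/4,-3/2,0,0],[0,0,-1/4,-3/2,0],[0,0,0,3/4,-9],[0,0,0,0,15/4]] * m5 [[1,0,0,0,0],[0,1,0,0,0],[0,0,1,0,0],[0,0,0,1,0],[0,0,0,0,1]] = m5 [[-5,-9,0,0,0],[0,-8,-3/2,0,0],[0,0,-9,-3/2,0],[0,0,0,-8,-9],[0,0,0,0,-5]]"
  by (rule eq5I) (auto simp: scalar_prod_def sum5 atLeast0LessThan)

lemma Bh3: "(189/8::'a::field_char_0) \<cdot>\<^sub>m 1\<^sub>m 5 + m5 [[15/4,-9,0,0,0],[0,3/4,-3/2,0,0],[0,0,-1/4,-3/2,0],[0,0,0,3/4,-9],[0,0,0,0,15/4]] * m5 [[-5,-9,0,0,0],[0,-8,-3/2,0,0],[0,0,-9,-3/2,0],[0,0,0,-8,-9],[0,0,0,0,-5]] = m5 [[39/8,153/4,27/2,0,0],[0,141/8,99/8,9/4,0],[0,0,207/8,99/8,27/2],[0,0,0,141/8,153/4],[0,0,0,0,39/8]]"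
  by (rule eq5I) (auto simp: scalar_prod_def sum5 atLeast0LessThan)

lemma Bh2: "(-603/32::'a::field_char_0) \<cdot>\<^sub>m 1\<^sub>m 5 + m5 [[15/4,-9,0,0,0],[0,3/4,-3/2,0,0],[0,0,-1/4,-3/2,0],[0,0,0,3/4,-9],[0,0,0,0,15/4]] * m5 [[39/8,153/4,27/2,0,0],[0,141/8,99/8,9/4,0],[0,0,207/8,99/8,27/2],[0,0,0,141/8,153/4],[0,0,0,0,39/8]] = m5 [[-9/16,-243/16,-243/4,-81/4,0],[0,-45/8,-945/32,-135/8,-81/4],[0,0,-405/16,-945/32,-243/4],[0,0,0,-45/8,-243/16],[0,0,0,0,-9/16]]"
  by (rule eq5I) (auto simp: scalar_prod_def sum5 atLeast0LessThan)

lemma Bh1: "(405/256::'a::field_char_0) \<cdot>\<^sub>m 1\<^sub>m 5 + m5 [[15/4,-9,0,0,0],[0,3/4,-3/2,0,0],[0,0,-1/4,-3/2,0],[0,0,0,3/4,-9],[0,0,0,0,15/4]] * m5 [[-9/16,-243/16,-243/4,-81/4,0],[0,-45/8,-945/32,-135/8,-81/4],[0,0,-405/16,-945/32,-243/4],[0,0,0,-45/8,-243/16],[0,0,0,0,-9/16]] = m5 [[-135/256,-405/64,1215/32,1215/16,729/4],[0,-675/256,2025/128,2025/64,1215/16],[0,0,2025/256,2025/128,1215/32],[0,0,0,-675/256,-405/64],[0,0,0,0,-135/256]]"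
  by (rule eq5I) (auto simp: scalar_prod_def sum5 atLeast0LessThan)

lemma Bh0: "(2025/1024::'a::field_char_0) \<cdot>\<^sub>m 1\<^sub>m 5 + m5 [[15/4,-9,0,0,0],[0,3/4,-3/2,0,0],[0,0,-1/4,-3/2,0],[0,0,0,3/4,-9],[0,0,0,0,15/4]] * m5 [[-135/256,-405/64,1215/32,1215/16,729/4],[0,-675/256,2025/128,2025/64,1215/16],[0,0,2025/256,2025/128,1215/32],[0,0,0,-675/256,-405/64],[0,0,0,0,-135/256]] = m5 [[0,0,0,0,0],[0,0,0,0,0],[0,0,0,0,0],[0,0,0,0,0],[0,0,0,0,0]]"
  by (rule eq5I) (auto simp: scalar_prod_def sum5 atLeast0LessThan)

lemma B_ann: "poly_mat ([:1/4, 1:] * [:-3/4, 1:]^2 * [:-15/4, 1:]^2) (matB::'a::field_char_0 mat) = 0\<^sub>m 5 5"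
proof -
  have c: "(m5 [[15/4,-9,0,0,0],[0,3/4,-3/2,0,0],[0,0,-1/4,-3/2,0],[0,0,0,3/4,-9],[0,0,0,0,15/4]] :: 'a::field_char_0 mat) \<in> carrier_mat 5 5" by simp
  have "poly_mat ([:1/4, 1:] * [:-3/4, 1:]^2 * [:-15/4, 1:]^2) (matB::'a::field_char_0 mat) = m5 [[0,0,0,0,0],[0,0,0,0,0],[0,0,0,0,0],[0,0,0,0,0],[0,0,0,0,0]]"
    unfolding B_m5 p_exp by (simp only: poly_mat_pCons[OF c] poly_mat_0[OF c] Bh5 Bh4 Bh3 Bh2 Bh1 Bh0)
  also have "(m5 [[0,0,0,0,0],[0,0,0,0,0],[0,0,0,0,0],[0,0,0,0,0],[0,0,0,0,0]] :: 'a::field_char_0 mat) = 0\<^sub>m 5 5" by (rule eq5I) auto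
  finally show ?thesis .
qed

lemma B_sol: "\<And>q0 q1 q2 q3 q4. q0 \<cdot>\<^sub>v unit_vec 5 4 + m5 [[15/4,-9,0,0,0],[0,3/4,-3/2,0,0],[0,0,-1/4,-3/2,0],[0,0,0,3/4,-9],[0,0,0,0,15/4]] *\<^sub>v (q1 \<cdot>\<^sub>v unit_vec 5 4 + m5 [[15/4,-9,0,0,0],[0,3/4,-3/2,0,0],[0,0,-1/4,-3/2,0],[0,0,0,3/4,-9],[0,0,0,0,15/4]] *\<^sub>v (q2 \<cdot>\<^sub>v unit_vec 5 4 + m5 [[15/4,-9,0,0,0],[0,3/4,-3/2,0,0],[0,0,-1/4,-3/2,0],[0,0,0,3/4,-9],[0,0,0,0,15/4]] *\<^sub>v (q3 \<cdot>\<^sub>v unit_vec 5 4 + m5 [[15/4,-9,0,0,0],[0,3/4,-3/2,0,0],[0,0,-1/4,-3/2,0],[0,0,0,3/4,-9],[0,0,0,0,15/4]] *\<^sub>v (q4 \<cdot>\<^sub>v unit_vec 5 4)))) = (0\<^sub>v 5 :: 'a::field_char_0 vec)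
     \<Longrightarrow> q0 = 0 \<and> q1 = 0 \<and> q2 = 0 \<and> q3 = 0 \<and> q4 = 0"
proof -
  fix q0 q1 q2 q3 q4 :: 'a
  assume h: "q0 \<cdot>\<^sub>v unit_vec 5 4 + m5 [[15/4,-9,0,0,0],[0,3/4,-3/2,0,0],[0,0,-1/4,-3/2,0],[0,0,0,3/4,-9],[0,0,0,0,15/4]] *\<^sub>v (q1 \<cdot>\<^sub>v unit_vec 5 4 + m5 [[15/4,-9,0,0,0],[0,3/4,-3/2,0,0],[0,0,-1/4,-3/2,0],[0,0,0,3/4,-9],[0,0,0,0,15/4]] *\<^sub>v (q2 \<cdot>\<^sub>v unit_vec 5 4 + m5 [[15/4,-9,0,0,0],[0,3/4,-3/2,0,0],[0,0,-1/4,-3/2,0],[0,0,0,3/4,-9],[0,0,0,0,15/4]] *\<^sub>v (q3 \<cdot>\<^sub>v unit_vec 5 4 + m5 [[15/4,-9,0,0,0],[0,3/4,-3/2,0,0],[0,0,-1/4,-3/2,0],[0,0,0,3/4,-9],[0,0,0,0,15/4]] *\<^sub>v (q4 \<cdot>\<^sub>v unit_vec 5 4)))) = (0\<^sub>v 5 :: 'a::field_char_0 vec)"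
  have h4: "q4 = 0" using arg_cong[OF h, of "\<lambda>x. x $ 0"] by (simp del: index_mult_mat_vec add: m5_mult_vec)
  have h3: "q3 = 0" using arg_cong[OF h, of "\<lambda>x. x $ 1"] h4 by (simp del: index_mult_mat_vec add: m5_mult_vec)
  have h2: "q2 = 0" using arg_cong[OF h, of "\<lambda>x. x $ 2"] h4 h3 by (simp del: index_mult_mat_vec add: m5_mult_vec)
  have h1: "q1 = 0" using arg_cong[OF h, of "\<lambda>x. x $ 3"] h4 h3 h2 by (simp del: index_mult_mat_vec add: m5_mult_vec)
  have h0: "q0 = 0" using arg_cong[OF h, of "\<lambda>x. x $ 4"] h4 h3 h2 h1 by (simp del: index_mult_mat_vec add: m5_mult_vec)
  show "q0 = 0 \<and> q1 = 0 \<and> q2 = 0 \<and> q3 = 0 \<and> q4 = 0" using h0 h1 h2 h3 h4 by simp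
qed

lemma B_low: "q \<noteq> 0 \<Longrightarrow> poly_mat q (matB::'a::field_char_0 mat) = 0\<^sub>m 5 5 \<Longrightarrow> 5 \<le> degree q"
  unfolding B_m5 by (rule lower_generic[OF _ _ B_sol]) auto

lemma B_min: "is_minimal_polynomial (matB::'a::field_char_0 mat) ([:1/4, 1:] * [:-3/4, 1:]^2 * [:-15/4, 1:]^2)"
  unfolding is_minimal_polynomial_def
proof (intro conjI allI impI)
  have d: "dim_row (matB::'a::field_char_0 mat) = 5" by (simp add: B_m5)
  show "lead_coeff ([:1/4, 1:] * [:-3/4, 1:]^2 * [:-15/4, 1:]^2 :: 'a poly) = 1" by (rule p_lc)
  show "poly_mat ([:1/4, 1:] * [:-3/4, 1:]^2 * [:-15/4, 1:]^2) (matB::'a::field_char_0 mat) = 0\<^sub>m (dim_row (matB::'a::field_char_0 mat)) (dim_row (matB::'a::field_char_0 mat))"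
    unfolding d by (rule B_ann)
  fix q :: "'a poly"
  assume "q \<noteq> 0 \<and> poly_mat q (matB::'a::field_char_0 mat) = 0\<^sub>m (dim_row (matB::'a::field_char_0 mat)) (dim_row (matB::'a::field_char_0 mat))"
  then show "degree ([:1/4, 1:] * [:-3/4, 1:]^2 * [:-15/4, 1:]^2 :: 'a poly) \<le> degree q"
    using B_low[of q] unfolding d p_deg by auto
qed

lemma Ch5: "(1::'a::field_char_0) \<cdot>\<^sub>m 1\<^sub>m 5 + m5 [[-9/4,9,0,0,0],[-1,15/4,3/2,0,0],[0,-1,23/4,3/2,0],[0,0,-1,15/4,9],[0,0,0,-1,-9/4]] * 0\<^sub>m 5 5 = m5 [[1,0,0,0,0],[0,1,0,0,0],[0,0,1,0,0],[0,0,0,1,0],[0,0,0,0,1]]"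
  by (rule eq5I) auto

lemma Ch4: "(-35/4::'a::field_char_0) \<cdot>\<^sub>m 1\<^sub>m 5 + m5 [[-9/4,9,0,0,0],[-1,15/4,3/2,0,0],[0,-1,23/4,3/2,0],[0,0,-1,15/4,9],[0,0,0,-1,-9/4]] * m5 [[1,0,0,0,0],[0,1,0,0,0],[0,0,1,0,0],[0,0,0,1,0],[0,0,0,0,1]] = m5 [[-11,9,0,0,0],[-1,-5,3/2,0,0],[0,-1,-3,3/2,0],[0,0,-1,-5,9],[0,0,0,-1,-11]]"
  by (rule eq5I) (auto simp: scalar_prod_def sum5 atLeast0LessThan)

lemma Ch3: "(189/8::'a::field_char_0) \<cdot>\<^sub>m 1\<^sub>m 5 + m5 [[-9/4,9,0,0,0],[-1,15/4,3/2,0,0],[0,-1,23/4,3/2,0],[0,0,-1,15/4,9],[0,0,0,-1,-9/4]] * m5 [[-11,9,0,0,0],[-1,-5,3/2,0,0],[0,-1,-3,3/2,0],[0,0,-1,-5,9],[0,0,0,-1,-11]] = m5 [[315/8,-261/4,27/2,0,0],[29/4,-45/8,9/8,9/4,0],[1,-3/4,27/8,9/8,27/2],[0,1,-3/4,-45/8,-261/4],[0,0,1,29/4,315/8]]"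
  by (rule eq5I) (auto simp: scalar_prod_def sum5 atLeast0LessThan)

lemma Ch2: "(-603/32::'a::field_char_0) \<cdot>\<^sub>m 1\<^sub>m 5 + m5 [[-9/4,9,0,0,0],[-1,15/4,3/2,0,0],[0,-1,23/4,3/2,0],[0,0,-1,15/4,9],[0,0,0,-1,-9/4]] * m5 [[315/8,-261/4,27/2,0,0],[29/4,-45/8,9/8,9/4,0],[1,-3/4,27/8,9/8,27/2],[0,1,-3/4,-45/8,-261/4],[0,0,1,29/4,315/8]] = m5 [[-675/16,1539/16,-81/4,81/4,0],[-171/16,387/16,-135/32,81/8,81/4],[-3/2,45/16,-27/16,-135/32,-81/4],[-1,9/2,45/16,387/16,1539/16],[0,-1,-3/2,-171/16,-675/16]]"
  by (rule eq5I) (auto simp: scalar_prod_def sum5 atLeast0LessThan)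

lemma Ch1: "(405/256::'a::field_char_0) \<cdot>\<^sub>m 1\<^sub>m 5 + m5 [[-9/4,9,0,0,0],[-1,15/4,3/2,0,0],[0,-1,23/4,3/2,0],[0,0,-1,15/4,9],[0,0,0,-1,-9/4]] * m5 [[-675/16,1539/16,-81/4,81/4,0],[-171/16,387/16,-135/32,81/8,81/4],[-3/2,45/16,-27/16,-135/32,-81/4],[-1,9/2,45/16,387/16,1539/16],[0,-1,-3/2,-171/16,-675/16]] = m5 [[81/256,81/64,243/32,729/16,729/4],[-9/64,81/256,243/128,729/64,729/16],[9/16,-81/64,81/256,243/128,243/32],[-9/4,81/16,-81/64,81/256,81/64],[1,-9/4,9/16,-9/64,81/256]]"
  by (rule eq5I) (auto simp: scalar_prod_def sum5 atLeast0LessThan)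

lemma Ch0: "(2025/1024::'a::field_char_0) \<cdot>\<^sub>m 1\<^sub>m 5 + m5 [[-9/4,9,0,0,0],[-1,15/4,3/2,0,0],[0,-1,23/4,3/2,0],[0,0,-1,15/4,9],[0,0,0,-1,-9/4]] * m5 [[81/256,81/64,243/32,729/16,729/4],[-9/64,81/256,243/128,729/64,729/16],[9/16,-81/64,81/256,243/128,243/32],[-9/4,81/16,-81/64,81/256,81/64],[1,-9/4,9/16,-9/64,81/256]] = m5 [[0,0,0,0,0],[0,0,0,0,0],[0,0,0,0,0],[0,0,0,0,0],[0,0,0,0,0]]"
  by (rule eq5I) (auto simp: scalar_prod_def sum5 atLeast0LessThan)

lemma C_ann: "poly_mat ([:1/4, 1:] * [:-3/4, 1:]^2 * [:-15/4, 1:]^2) (matC::'a::field_char_0 mat) = 0\<^sub>m 5 5"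
proof -
  have c: "(m5 [[-9/4,9,0,0,0],[-1,15/4,3/2,0,0],[0,-1,23/4,3/2,0],[0,0,-1,15/4,9],[0,0,0,-1,-9/4]] :: 'a::field_char_0 mat) \<in> carrier_mat 5 5" by simp
  have "poly_mat ([:1/4, 1:] * [:-3/4, 1:]^2 * [:-15/4, 1:]^2) (matC::'a::field_char_0 mat) = m5 [[0,0,0,0,0],[0,0,0,0,0],[0,0,0,0,0],[0,0,0,0,0],[0,0,0,0,0]]"
    unfolding C_m5 p_exp by (simp only: poly_mat_pCons[OF c] poly_mat_0[OF c] Ch5 Ch4 Ch3 Ch2 Ch1 Ch0)
  also have "(m5 [[0,0,0,0,0],[0,0,0,0,0],[0,0,0,0,0],[0,0,0,0,0],[0,0,0,0,0]] :: 'a::field_char_0 mat) = 0\<^sub>m 5 5" by (rule eq5I) auto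
  finally show ?thesis .
qed

lemma C_sol: "\<And>q0 q1 q2 q3 q4. q0 \<cdot>\<^sub>v unit_vec 5 0 + m5 [[-9/4,9,0,0,0],[-1,15/4,3/2,0,0],[0,-1,23/4,3/2,0],[0,0,-1,15/4,9],[0,0,0,-1,-9/4]] *\<^sub>v (q1 \<cdot>\<^sub>v unit_vec 5 0 + m5 [[-9/4,9,0,0,0],[-1,15/4,3/2,0,0],[0,-1,23/4,3/2,0],[0,0,-1,15/4,9],[0,0,0,-1,-9/4]] *\<^sub>v (q2 \<cdot>\<^sub>v unit_vec 5 0 + m5 [[-9/4,9,0,0,0],[-1,15/4,3/2,0,0],[0,-1,23/4,3/2,0],[0,0,-1,15/4,9],[0,0,0,-1,-9/4]] *\<^sub>v (q3 \<cdot>\<^sub>v unit_vec 5 0 + m5 [[-9/4,9,0,0,0],[-1,15/4,3/2,0,0],[0,-1,23/4,3/2,0],[0,0,-1,15/4,9],[0,0,0,-1,-9/4]] *\<^sub>v (q4 \<cdot>\<^sub>v unit_vec 5 0)))) = (0\<^sub>v 5 :: 'a::field_char_0 vec)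
     \<Longrightarrow> q0 = 0 \<and> q1 = 0 \<and> q2 = 0 \<and> q3 = 0 \<and> q4 = 0"
proof -
  fix q0 q1 q2 q3 q4 :: 'a
  assume h: "q0 \<cdot>\<^sub>v unit_vec 5 0 + m5 [[-9/4,9,0,0,0],[-1,15/4,3/2,0,0],[0,-1,23/4,3/2,0],[0,0,-1,15/4,9],[0,0,0,-1,-9/4]] *\<^sub>v (q1 \<cdot>\<^sub>v unit_vec 5 0 + m5 [[-9/4,9,0,0,0],[-1,15/4,3/2,0,0],[0,-1,23/4,3/2,0],[0,0,-1,15/4,9],[0,0,0,-1,-9/4]] *\<^sub>v (q2 \<cdot>\<^sub>v unit_vec 5 0 + m5 [[-9/4,9,0,0,0],[-1,15/4,3/2,0,0],[0,-1,23/4,3/2,0],[0,0,-1,15/4,9],[0,0,0,-1,-9/4]] *\<^sub>v (q3 \<cdot>\<^sub>v unit_vec 5 0 + m5 [[-9/4,9,0,0,0],[-1,15/4,3/2,0,0],[0,-1,23/4,3/2,0],[0,0,-1,15/4,9],[0,0,0,-1,-9/4]] *\<^sub>v (q4 \<cdot>\<^sub>v unit_vec 5 0)))) = (0\<^sub>v 5 :: 'a::field_char_0 vec)"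
  have h4: "q4 = 0" using arg_cong[OF h, of "\<lambda>x. x $ 4"] by (simp del: index_mult_mat_vec add: m5_mult_vec)
  have h3: "q3 = 0" using arg_cong[OF h, of "\<lambda>x. x $ 3"] h4 by (simp del: index_mult_mat_vec add: m5_mult_vec)
  have h2: "q2 = 0" using arg_cong[OF h, of "\<lambda>x. x $ 2"] h4 h3 by (simp del: index_mult_mat_vec add: m5_mult_vec)
  have h1: "q1 = 0" using arg_cong[OF h, of "\<lambda>x. x $ 1"] h4 h3 h2 by (simp del: index_mult_mat_vec add: m5_mult_vec)
  have h0: "q0 = 0" using arg_cong[OF h, of "\<lambda>x. x $ 0"] h4 h3 h2 h1 by (simp del: index_mult_mat_vec add: m5_mult_vec)
  show "q0 = 0 \<and> q1 = 0 \<and> q2 = 0 \<and> q3 = 0 \<and> q4 = 0" using h0 h1 h2 h3 h4 by simp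
qed

lemma C_low: "q \<noteq> 0 \<Longrightarrow> poly_mat q (matC::'a::field_char_0 mat) = 0\<^sub>m 5 5 \<Longrightarrow> 5 \<le> degree q"
  unfolding C_m5 by (rule lower_generic[OF _ _ C_sol]) auto

lemma C_min: "is_minimal_polynomial (matC::'a::field_char_0 mat) ([:1/4, 1:] * [:-3/4, 1:]^2 * [:-15/4, 1:]^2)"
  unfolding is_minimal_polynomial_def
proof (intro conjI allI impI)
  have d: "dim_row (matC::'a::field_char_0 mat) = 5" by (simp add: C_m5)
  show "lead_coeff ([:1/4, 1:] * [:-3/4, 1:]^2 * [:-15/4, 1:]^2 :: 'a poly) = 1" by (rule p_lc)
  show "poly_mat ([:1/4, 1:] * [:-3/4, 1:]^2 * [:-15/4, 1:]^2) (matC::'a::field_char_0 mat) = 0\<^sub>m (dim_row (matC::'a::field_char_0 mat)) (dim_row (matC::'a::field_char_0 mat))"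
    unfolding d by (rule C_ann)
  fix q :: "'a poly"
  assume "q \<noteq> 0 \<and> poly_mat q (matC::'a::field_char_0 mat) = 0\<^sub>m (dim_row (matC::'a::field_char_0 mat)) (dim_row (matC::'a::field_char_0 mat))"
  then show "degree ([:1/4, 1:] * [:-3/4, 1:]^2 * [:-15/4, 1:]^2 :: 'a poly) \<le> degree q"
    using C_low[of q] unfolding d p_deg by auto
qed

lemma poly_mat_sim:
  fixes M D P Q :: "'a::comm_ring_1 mat"
  assumes c: "D \<in> carrier_mat n n" "P \<in> carrier_mat n n" "Q \<in> carrier_mat n n"
    and PQ: "P * Q = 1\<^sub>m n" and QP: "Q * P = 1\<^sub>m n" and M: "M = P * D * Q"
  shows "poly_mat p M = P * poly_mat p D * Q"
proof (induction p rule: pCons_induct)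
  case 0
  have "M \<in> carrier_mat n n" using c M by simp
  then show ?case using c by (simp add: poly_mat_0)
next
  case (pCons a p)
  have Mc: "M \<in> carrier_mat n n" using c M by simp
  define N where "N = poly_mat p D"
  have N: "N \<in> carrier_mat n n" unfolding N_def by (rule poly_mat_carrier[OF c(1)])
  have QPX: "Q * (P * X) = X" if "X \<in> carrier_mat n n" for X
  proof -
    have "Q * (P * X) = (Q * P) * X" using c that by simp
    then show ?thesis using QP that by simp
  qed
  have "poly_mat (pCons a p) M = a \<cdot>\<^sub>m 1\<^sub>m n + (P * D * Q) * (P * N * Q)"
    using pCons(2) Mc unfolding N_def by (simp add: poly_mat_pCons M)
  also have "(P * D * Q) * (P * N * Q) = P * (D * (N * Q))"
  proof -
    have cDQ: "D * Q \<in> carrier_mat n n" "N * Q \<in> carrier_mat n n" "P * (N * Q) \<in> carrier_mat n n"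
      using c N by (metis mult_carrier_mat)+
    have "P * D * Q = P * (D * Q)" "P * N * Q = P * (N * Q)" using c N by (metis assoc_mult_mat)+
    moreover have "(P * (D * Q)) * (P * (N * Q)) = P * ((D * Q) * (P * (N * Q)))"
      using c cDQ by (metis assoc_mult_mat)
    moreover have "(D * Q) * (P * (N * Q)) = D * (Q * (P * (N * Q)))"
      using c cDQ by (metis assoc_mult_mat)
    moreover have "Q * (P * (N * Q)) = N * Q" using QPX cDQ by blast
    ultimately show ?thesis by simp
  qed
  also have "a \<cdot>\<^sub>m 1\<^sub>m n = a \<cdot>\<^sub>m (P * Q)" using PQ by simp
  also have "a \<cdot>\<^sub>m (P * Q) + P * (D * (N * Q)) = P * (a \<cdot>\<^sub>m 1\<^sub>m n + D * N) * Q"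
  proof -
    have "P * (a \<cdot>\<^sub>m 1\<^sub>m n + D * N) * Q = P * ((a \<cdot>\<^sub>m 1\<^sub>m n + D * N) * Q)"
      using c N by (intro assoc_mult_mat) auto
    also have "(a \<cdot>\<^sub>m 1\<^sub>m n + D * N) * Q = a \<cdot>\<^sub>m Q + D * (N * Q)"
      using c N by (simp add: add_mult_distrib_mat[of _ n n] mult_smult_assoc_mat[of _ n n])
    also have "P * (a \<cdot>\<^sub>m Q + D * (N * Q)) = a \<cdot>\<^sub>m (P * Q) + P * (D * (N * Q))"
    proof -
      have cc: "D * (N * Q) \<in> carrier_mat n n" "a \<cdot>\<^sub>m Q \<in> carrier_mat n n" using c N by (metis mult_carrier_mat smult_carrier_mat)+
      have "P * (a \<cdot>\<^sub>m Q + D * (N * Q)) = P * (a \<cdot>\<^sub>m Q) + P * (D * (N * Q))"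
        by (rule mult_add_distrib_mat[OF c(2) cc(2) cc(1)])
      also have "P * (a \<cdot>\<^sub>m Q) = a \<cdot>\<^sub>m (P * Q)" by (rule mult_smult_distrib[OF c(2) c(3)])
      finally show ?thesis .
    qed
    finally show ?thesis by simp
  qed
  finally show ?case using c(1) unfolding N_def by (simp add: poly_mat_pCons)
qed

lemma poly_mat_diag:
  fixes D :: "'a::comm_ring_1 mat"
  assumes c: "D \<in> carrier_mat n n" and d: "diagonal_mat D"
  shows "i < n \<Longrightarrow> j < n \<Longrightarrow> poly_mat p D $$ (i,j) = (if i = j then poly p (D $$ (i,i)) else 0)"
proof (induction p arbitrary: i j rule: pCons_induct)
  case 0
  then show ?case using c by (simp add: poly_mat_0)
next
  case (pCons a p)
  define N where "N = poly_mat p D"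
  have N: "N \<in> carrier_mat n n" unfolding N_def by (rule poly_mat_carrier[OF c])
  have Dk: "D $$ (i,k) = 0" if "k < n" "k \<noteq> i" for k
    using d c pCons.prems that unfolding diagonal_mat_def by auto
  have "(D * N) $$ (i,j) = row D i \<bullet> col N j" using c N pCons.prems by simp
  also have "\<dots> = (\<Sum>k\<in>{0..<n}. D $$ (i,k) * N $$ (k,j))"
    unfolding scalar_prod_def using c N pCons.prems by (intro sum.cong) auto
  also have "\<dots> = (\<Sum>k\<in>{0..<n}. if k = i then D $$ (i,i) * N $$ (i,j) else 0)"
    by (rule sum.cong) (auto simp: Dk)
  also have "\<dots> = D $$ (i,i) * N $$ (i,j)" using pCons.prems by simp
  finally have DN: "(D * N) $$ (i,j) = D $$ (i,i) * N $$ (i,j)" .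
  have "poly_mat (pCons a p) D $$ (i,j) = a * (if i = j then 1 else 0) + (D * N) $$ (i,j)"
    using c N pCons.prems unfolding N_def by (simp add: poly_mat_pCons)
  also have "\<dots> = (if i = j then poly (pCons a p) (D $$ (i,i)) else 0)"
    using DN pCons.IH[OF pCons.prems] by (cases "i = j") (simp_all add: N_def)
  finally show ?case .
qed


lemma poly_mat_diag_zero:
  fixes D :: "'a::comm_ring_1 mat"
  assumes c: "D \<in> carrier_mat n n" and d: "diagonal_mat D"
  and z: "\<And>i. i < n \<Longrightarrow> poly r (D $$ (i,i)) = 0"
  shows "poly_mat r D = 0\<^sub>m n n"
proof (rule eq_matI)
  fix i j assume ij: "i < dim_row (0\<^sub>m n n :: 'a mat)" "j < dim_col (0\<^sub>m n n :: 'a mat)"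
  then show "poly_mat r D $$ (i,j) = 0\<^sub>m n n $$ (i,j)"
    using poly_mat_diag[OF c d, of i j r] z[of i] by (cases "i = j") simp_all
qed (use poly_mat_carrier[OF c, of r] in auto)
lemma r_exp: "([:1/4, 1:] * [:-3/4, 1:] * [:-15/4, 1:] :: 'a::field_char_0 poly)
  = pCons (45/64) (pCons (27/16) (pCons (-17/4) (pCons 1 0)))"
  by simp

lemma r_deg: "degree ([:1/4, 1:] * [:-3/4, 1:] * [:-15/4, 1:] :: 'a::field_char_0 poly) = 3"
  unfolding r_exp by simp

lemma r_nz: "([:1/4, 1:] * [:-3/4, 1:] * [:-15/4, 1:] :: 'a::field_char_0 poly) \<noteq> 0"
  unfolding r_exp by simp

lemma root_r: "poly ([:1/4, 1:] * [:-3/4, 1:]^2 * [:-15/4, 1:]^2) (x::'a::field_char_0) = 0 \<Longrightarrow>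
  poly ([:1/4, 1:] * [:-3/4, 1:] * [:-15/4, 1:]) x = 0"
proof -
  assume h: "poly ([:1/4, 1:] * [:-3/4, 1:]^2 * [:-15/4, 1:]^2) x = 0"
  have e1: "poly ([:1/4, 1:] * [:-3/4, 1:]^2 * [:-15/4, 1:]^2) x = (1/4 + x) * (-3/4 + x)^2 * (-15/4 + x)^2"
    by (simp only: poly_mult poly_power) (simp add: algebra_simps)
  have e2: "poly ([:1/4, 1:] * [:-3/4, 1:] * [:-15/4, 1:]) x = (1/4 + x) * (-3/4 + x) * (-15/4 + x)"
    by (simp only: poly_mult) (simp add: algebra_simps)
  from h have "(1/4 + x) * (-3/4 + x)^2 * (-15/4 + x)^2 = 0" unfolding e1 .
  then have "1/4 + x = 0 \<or> -3/4 + x = 0 \<or> -15/4 + x = 0" by auto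
  then show ?thesis unfolding e2 by auto
qed

lemma not_diag:
  fixes M :: "'a::field_char_0 mat"
  assumes Mc: "M \<in> carrier_mat 5 5"
  and ann: "poly_mat ([:1/4, 1:] * [:-3/4, 1:]^2 * [:-15/4, 1:]^2) M = 0\<^sub>m 5 5"
  and low: "\<And>q. q \<noteq> 0 \<Longrightarrow> poly_mat q M = 0\<^sub>m 5 5 \<Longrightarrow> 5 \<le> degree q"
  shows "\<not> diagonalizable M"
proof
  assume "diagonalizable M"
  then obtain D where d: "diagonal_mat D" and s: "similar_mat M D" unfolding diagonalizable_def by blast
  then obtain P Q where w: "similar_mat_wit M D P Q" unfolding similar_mat_def by blast
  have dr: "dim_row M = 5" using Mc by simp
  have c: "D \<in> carrier_mat 5 5" "P \<in> carrier_mat 5 5" "Q \<in> carrier_mat 5 5"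
    and PQ: "P * Q = 1\<^sub>m 5" and QP: "Q * P = 1\<^sub>m 5" and MD: "M = P * D * Q"
    using w unfolding similar_mat_wit_def dr Let_def by auto
  have DM: "D = Q * M * P"
  proof -
    have "Q * M * P = Q * (P * D * Q) * P" using MD by simp
    also have "\<dots> = (Q * P) * D * (Q * P)" using c by (simp add: assoc_mult_mat[of _ 5 5 _ 5 _ 5])
    also have "\<dots> = D" using QP c by simp
    finally show ?thesis by simp
  qed
  let ?p = "[:1/4, 1:] * [:-3/4, 1:]^2 * [:-15/4, 1:]^2 :: 'a poly"
  let ?r = "[:1/4, 1:] * [:-3/4, 1:] * [:-15/4, 1:] :: 'a poly"
  have "poly_mat ?p D = Q * poly_mat ?p M * P"
    by (rule poly_mat_sim[OF Mc c(3) c(2) QP PQ DM])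
  also have "\<dots> = 0\<^sub>m 5 5" unfolding ann using c by simp
  finally have pD: "poly_mat ?p D = 0\<^sub>m 5 5" .
  have rD: "poly_mat ?r D = 0\<^sub>m 5 5"
  proof (rule poly_mat_diag_zero[OF c(1) d])
    fix i :: nat assume i: "i < 5"
    then have "poly_mat ?p D $$ (i,i) = 0" unfolding pD by simp
    then have "poly ?p (D $$ (i,i)) = 0" using poly_mat_diag[OF c(1) d, of i i ?p] i by simp
    then show "poly ?r (D $$ (i,i)) = 0" by (rule root_r)
  qed
  have "poly_mat ?r M = P * poly_mat ?r D * Q"
    by (rule poly_mat_sim[OF c PQ QP MD])
  also have "\<dots> = 0\<^sub>m 5 5" unfolding rD using c by simp
  finally have "5 \<le> degree ?r" using low r_nz by blast
  then show False using r_deg by simp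
qed

theorem mainTheorem19:
  assumes "alg_closed_type TYPE('a::field_char_0)"
  shows "racah_rep 5 (matA::'a mat) matB matC matD
    \<and> racah_alpha (matA::'a mat) matB matC matD = 0\<^sub>m 5 5
    \<and> racah_beta (matA::'a mat) matB matC matD = 0\<^sub>m 5 5
    \<and> racah_gamma (matA::'a mat) matB matC matD = 0\<^sub>m 5 5
    \<and> irreducible_rep 5 {matA::'a mat, matB, matC, matD}
    \<and> (\<forall>M \<in> {matA::'a mat, matB, matC}.
         is_minimal_polynomial M ([:1/4, 1:] * [:-3/4, 1:]^2 * [:-15/4, 1:]^2)
         \<and> \<not> diagonalizable M)"
proof -
  have nA: "\<not> diagonalizable (matA::'a mat)" by (rule not_diag[OF carrA A_ann A_low])
  have nB: "\<not> diagonalizable (matB::'a mat)" by (rule not_diag[OF carrB B_ann B_low])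
  have nC: "\<not> diagonalizable (matC::'a mat)" by (rule not_diag[OF carrC C_ann C_low])
  have "\<forall>M \<in> {matA::'a mat, matB, matC}.
         is_minimal_polynomial M ([:1/4, 1:] * [:-3/4, 1:]^2 * [:-15/4, 1:]^2)
         \<and> \<not> diagonalizable M"
    using A_min B_min C_min nA nB nC by blast
  then show ?thesis using rep alpha0 beta0 gamma0 irr by blast
qed

end
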